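(* Let $\delta$ be a constant with $\mathrm{e}<\delta\le\sum_{j=1}^{5}(5/6)^j$. There is a constant $C>0$ (depending only on $\delta$) such that for every $k\ge 2$, when $k$ nodes of a one-hop radio network without collision detection all receive a message at time $0$ and each runs protocol One-fail Adaptive with parameter $\delta$, all $k$ messages are delivered within $2(\delta+1)k+C\log^2 k$ communication steps with probability at least $1-2/(1+k)$.
   Context: Model (one-hop Radio Network without collision detection): time is divided into synchronous communication steps $1,2,\dots$. A node holding an undelivered message is active. In each step each active node may transmit. If exactly one node transmits, the transmission is successful: its message is delivered, all other nodes receive it, and the transmitting node becomes idle, never transmitting again. If zero or at least two nodes transmit, nobody receives anything, and nodes cannot distinguish these two cases. Nodes have no prior information (not the number $k$ of active nodes, nor the total number of nodes, nor labels). Static $k$-selection: $k$ nodes are activated simultaneously; the problem is solved when all $k$ messages have been delivered. $\log$ denotes $\log_2$. Protocol One-fail Adaptive with parameter $\delta$, run by each active node: initially set $\widetilde\kappa\leftarrow\delta+1$ and $\sigma\leftarrow0$. In each step $s=1,2,\dots$: if $s$ is even (a BT-step), transmit with probability $1/(1+\log(\sigma+1))$; if $s$ is odd (an AT-step), transmit with probability $1/\widetilde\kappa$ and then set $\widetilde\kappa\leftarrow\widetilde\kappa+1$. Whenever the node receives a message from another node in step $s$: set $\sigma\leftarrow\sigma+1$, and if $s$ is even set $\widetilde\kappa\leftarrow\max\{\widetilde\kappa-\delta,\delta+1\}$, while if $s$ is odd set $\widetilde\kappa\leftarrow\max\{\widetilde\kappa-\delta-1,\delta+1\}$. The node stops as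 soon as its own message is delivered. *)

theory Defs
  imports "HOL-Probability.Probability"
begin

text \<open>Local state of an active node: (sigma, kappa~). All nodes are labelled 0..k-1
  (labels are only used for the model; the protocol does not use them).\<close>

type_synonym lstate = "nat \<times> real"
type_synonym gstate = "nat set \<times> (nat \<Rightarrow> lstate)"

text \<open>Transmission probability of a node in step s (BT-step if s even, AT-step if s odd).\<close>
definition txprob :: "nat \<Rightarrow> lstate \<Rightarrow> real" where
  "txprob s st = (if even s then 1 / (1 + log 2 (real (fst st) + 1)) else 1 / snd st)"

definition tick :: "nat \<Rightarrow> lstate \<Rightarrow> lstate" where
  "tick s st = (if odd s then (fst st, snd st + 1) else st)"

definition recv :: "real \<Rightarrow> nat \<Rightarrow> lstate \<Rightarrow> lstate" where
  "recv \<delta> s st = (fst st + 1,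
      (if even s then max (snd st - \<delta>) (\<delta> + 1) else max (snd st - \<delta> - 1) (\<delta> + 1)))"

definition outcome :: "real \<Rightarrow> nat \<Rightarrow> gstate \<Rightarrow> (nat \<Rightarrow> bool) \<Rightarrow> gstate" where
  "outcome \<delta> s g f =
     (let A = fst g; T = {i \<in> A. f i}; loc' = (\<lambda>j. tick s (snd g j)) in
      if card T = 1 then (A - T, \<lambda>j. recv \<delta> s (loc' j)) else (A, loc'))"

definition ofa_step :: "real \<Rightarrow> nat \<Rightarrow> gstate \<Rightarrow> gstate pmf" where
  "ofa_step \<delta> s g =
     map_pmf (outcome \<delta> s g)
       (Pi_pmf (fst g) False (\<lambda>i. bernoulli_pmf (txprob s (snd g i))))"

text \<open>Distribution of the global state after n steps (steps numbered 1,2,...),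
  starting with k active nodes, each with sigma = 0 and kappa~ = delta + 1.\<close>
primrec ofa_run :: "real \<Rightarrow> nat \<Rightarrow> nat \<Rightarrow> gstate pmf" where
  "ofa_run \<delta> k 0 = return_pmf ({..<k}, \<lambda>_. (0, \<delta> + 1))"
| "ofa_run \<delta> k (Suc n) = bind_pmf (ofa_run \<delta> k n) (ofa_step \<delta> (Suc n))"

end

theory Submission
  imports Defs
begin

definition proj :: "gstate \<Rightarrow> nat \<times> lstate" where
  "proj g = (card (fst g), snd g 0)"

definition qsucc :: "nat \<Rightarrow> nat \<Rightarrow> lstate \<Rightarrow> real" where
  "qsucc s n st = real n * txprob s st * (1 - txprob s st) ^ (n - 1)"

definition redstep :: "real \<Rightarrow> nat \<Rightarrow> nat \<times> lstate \<Rightarrow> (nat \<times> lstate) pmf" where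
  "redstep \<delta> s x = map_pmf (\<lambda>b. if b then (fst x - 1, recv \<delta> s (tick s (snd x))) else (fst x, tick s (snd x)))
      (bernoulli_pmf (qsucc s (fst x) (snd x)))"

primrec red_run :: "real \<Rightarrow> nat \<Rightarrow> nat \<Rightarrow> (nat \<times> lstate) pmf" where
  "red_run \<delta> k 0 = return_pmf (k, (0, \<delta> + 1))"
| "red_run \<delta> k (Suc n) = bind_pmf (red_run \<delta> k n) (redstep \<delta> (Suc n))"

lemma map_eq1_binomial:
  assumes "0 \<le> p" "p \<le> 1"
  shows "map_pmf (\<lambda>c. c = 1) (binomial_pmf n p) = bernoulli_pmf (real n * p * (1 - p) ^ (n - 1))"
proof (rule pmf_eqI)
  fix b :: bool
  have q: "pmf (binomial_pmf n p) 1 = real n * p * (1 - p) ^ (n - 1)"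
    using assms by simp
  have q1: "real n * p * (1 - p) ^ (n - 1) \<le> 1" using pmf_le_1[of "binomial_pmf n p" 1] q by simp
  have q0: "0 \<le> real n * p * (1 - p) ^ (n - 1)" using assms by simp
  show "pmf (map_pmf (\<lambda>c. c = 1) (binomial_pmf n p)) b = pmf (bernoulli_pmf (real n * p * (1 - p) ^ (n - 1))) b"
  proof (cases b)
    case True
    have "pmf (map_pmf (\<lambda>c. c = 1) (binomial_pmf n p)) True = measure_pmf.prob (binomial_pmf n p) {1}"
      by (simp add: pmf_map vimage_def)
    also have "\<dots> = pmf (binomial_pmf n p) 1" by (simp add: measure_pmf_single)
    finally show ?thesis using True q q0 q1 by simp
  next
    case False
    have "pmf (map_pmf (\<lambda>c. c = 1) (binomial_pmf n p)) False = measure_pmf.prob (binomial_pmf n p) (- {1})"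
      by (simp add: pmf_map vimage_def Compl_eq)
    also have "\<dots> = 1 - pmf (binomial_pmf n p) 1"
      using measure_pmf.prob_compl[of "{1}" "binomial_pmf n p"] by (simp add: measure_pmf_single Compl_eq_Diff_UNIV)
    finally show ?thesis using False q q0 q1 by simp
  qed
qed

definition inv :: "real \<Rightarrow> gstate \<Rightarrow> bool" where
  "inv \<delta> g \<longleftrightarrow> finite (fst g) \<and> (\<forall>j. snd g j = snd g 0) \<and> snd (snd g 0) \<ge> \<delta> + 1"

lemma txprob_bounds:
  assumes "snd st \<ge> 1"
  shows "0 \<le> txprob s st" "txprob s st \<le> 1"
proof -
  have l: "log 2 (real (fst st) + 1) \<ge> 0" by simp
  have aux: "\<And>x::real. 0 \<le> x \<Longrightarrow> 1 / (1 + x) \<le> 1" by (simp add: divide_le_eq)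
  have a: "1 / (1 + log 2 (real (fst st) + 1)) \<le> 1" using aux[OF l] .
  have b: "1 / snd st \<le> 1" using assms by simp
  show "0 \<le> txprob s st" "txprob s st \<le> 1" using assms l a b
    by (auto simp: txprob_def)
qed

lemma step_proj:
  assumes "inv \<delta> g" "\<delta> \<ge> 0"
  shows "map_pmf proj (ofa_step \<delta> s g) = redstep \<delta> s (proj g)"
proof -
  obtain A loc where g: "g = (A, loc)" by (cases g)
  let ?st = "loc 0"
  have fin: "finite A" and loc: "\<And>j. loc j = ?st" and k1: "snd ?st \<ge> \<delta> + 1"
    using assms(1) by (auto simp: inv_def g)
  have k1': "snd ?st \<ge> 1" using k1 assms(2) by simp
  let ?p = "txprob s ?st"
  have P: "Pi_pmf A False (\<lambda>i. bernoulli_pmf (txprob s (loc i))) = Pi_pmf A False (\<lambda>_. bernoulli_pmf ?p)"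
    by (subst loc) simp
  define H where "H = (\<lambda>b. if b then (card A - 1, recv \<delta> s (tick s ?st)) else (card A, tick s ?st))"
  have comp: "proj (outcome \<delta> s g f) = H (card {i \<in> A. f i} = 1)" for f
  proof (cases "card {i \<in> A. f i} = 1")
    case True
    have "card (A - {i \<in> A. f i}) = card A - 1"
      using True fin by (subst card_Diff_subset) auto
    then show ?thesis using True by (simp add: outcome_def proj_def H_def g Let_def)
  next
    case False
    then show ?thesis by (simp add: outcome_def proj_def H_def g Let_def)
  qed
  have "map_pmf proj (ofa_step \<delta> s g) = map_pmf (\<lambda>f. H (card {i \<in> A. f i} = 1)) (Pi_pmf A False (\<lambda>_. bernoulli_pmf ?p))"
    unfolding ofa_step_def pmf.map_comp o_def comp by (simp add: g P)
  also have "\<dots> = map_pmf H (map_pmf (\<lambda>c. c = 1) (map_pmf (\<lambda>f. card {i \<in> A. f i}) (Pi_pmf A False (\<lambda>_. bernoulli_pmf ?p))))"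
    by (simp add: pmf.map_comp o_def)
  also have "map_pmf (\<lambda>f. card {i \<in> A. f i}) (Pi_pmf A False (\<lambda>_. bernoulli_pmf ?p)) = binomial_pmf (card A) ?p"
    using binomial_pmf_altdef'[OF fin refl, of ?p False] txprob_bounds[OF k1'] by simp
  also have "map_pmf (\<lambda>c. c = 1) (binomial_pmf (card A) ?p) = bernoulli_pmf (qsucc s (card A) ?st)"
    unfolding qsucc_def by (rule map_eq1_binomial) (use txprob_bounds[OF k1'] in auto)
  also have "map_pmf H (bernoulli_pmf (qsucc s (card A) ?st)) = redstep \<delta> s (proj g)"
    by (simp only: redstep_def proj_def g H_def fst_conv snd_conv)
  finally show ?thesis .
qed

lemma step_inv:
  assumes "inv \<delta> g" "g' \<in> set_pmf (ofa_step \<delta> s g)" "\<delta> \<ge> 0"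
  shows "inv \<delta> g'"
proof -
  obtain A loc where g: "g = (A, loc)" by (cases g)
  have fin: "finite A" and loc: "\<And>j. loc j = loc 0" and k1: "snd (loc 0) \<ge> \<delta> + 1"
    using assms(1) by (auto simp: inv_def g)
  obtain f where g': "g' = outcome \<delta> s g f" using assms(2) by (auto simp: ofa_step_def)
  have t: "snd (tick s (loc 0)) \<ge> \<delta> + 1" using k1 by (auto simp: tick_def)
  have r: "snd (recv \<delta> s x) \<ge> \<delta> + 1" for x by (auto simp: recv_def)
  show ?thesis
    using fin t r loc unfolding g' outcome_def g inv_def Let_def
    by (auto simp del: One_nat_def)
      (metis loc)+
qed

lemma run_inv:
  assumes "\<delta> \<ge> 0"
  shows "\<forall>g \<in> set_pmf (ofa_run \<delta> k t). inv \<delta> g"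
proof (induction t)
  case 0
  then show ?case by (simp add: inv_def)
next
  case (Suc t)
  then show ?case using step_inv[OF _ _ assms] by auto
qed

lemma run_proj:
  assumes "\<delta> \<ge> 0"
  shows "map_pmf proj (ofa_run \<delta> k t) = red_run \<delta> k t"
proof (induction t)
  case 0
  then show ?case by (simp add: proj_def)
next
  case (Suc t)
  have "map_pmf proj (ofa_run \<delta> k (Suc t)) = bind_pmf (ofa_run \<delta> k t) (\<lambda>g. map_pmf proj (ofa_step \<delta> (Suc t) g))"
    by (simp add: map_bind_pmf)
  also have "\<dots> = bind_pmf (ofa_run \<delta> k t) (\<lambda>g. redstep \<delta> (Suc t) (proj g))"
    using run_inv[OF assms, of k t] step_proj[OF _ assms] by (intro bind_pmf_cong) auto
  also have "\<dots> = bind_pmf (map_pmf proj (ofa_run \<delta> k t)) (redstep \<delta> (Suc t))"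
    by (simp add: bind_map_pmf)
  finally show ?case using Suc by simp
qed

lemma prob_reduce:
  assumes "\<delta> \<ge> 0"
  shows "measure_pmf.prob (ofa_run \<delta> k t) {g. fst g = {}} = measure_pmf.prob (red_run \<delta> k t) {x. fst x = 0}"
proof -
  have "measure_pmf.prob (red_run \<delta> k t) {x. fst x = 0} = measure_pmf.prob (ofa_run \<delta> k t) (proj -` {x. fst x = 0})"
    by (simp flip: run_proj[OF assms])
  also have "\<dots> = measure_pmf.prob (ofa_run \<delta> k t) {g. fst g = {}}"
  proof (rule measure_pmf.finite_measure_eq_AE)
    show "AE x in measure_pmf (ofa_run \<delta> k t). (x \<in> proj -` {x. fst x = 0}) = (x \<in> {g. fst g = {}})"
      using run_inv[OF assms, of k t] by (auto simp: AE_measure_pmf_iff proj_def inv_def)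
  qed auto
  finally show ?thesis by simp
qed

lemma qsucc_bounds:
  assumes "snd st \<ge> 1"
  shows "0 \<le> qsucc s n st" "qsucc s n st \<le> 1"
proof -
  have p: "0 \<le> txprob s st" "txprob s st \<le> 1" using txprob_bounds[OF assms] by auto
  have "pmf (binomial_pmf n (txprob s st)) 1 = qsucc s n st" using p by (simp add: qsucc_def)
  then show "0 \<le> qsucc s n st" "qsucc s n st \<le> 1" using pmf_le_1 pmf_nonneg by metis+
qed

lemma qsucc_0[simp]: "qsucc s 0 st = 0" by (simp add: qsucc_def)

definition rsucc :: "real \<Rightarrow> nat \<Rightarrow> nat \<times> lstate \<Rightarrow> nat \<times> lstate" where
  "rsucc \<delta> s x = (fst x - 1, recv \<delta> s (tick s (snd x)))"
definition rfail :: "nat \<Rightarrow> nat \<times> lstate \<Rightarrow> nat \<times> lstate" where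
  "rfail s x = (fst x, tick s (snd x))"

lemma redstep_alt: "redstep \<delta> s x = map_pmf (\<lambda>b. if b then rsucc \<delta> s x else rfail s x) (bernoulli_pmf (qsucc s (fst x) (snd x)))"
  unfolding redstep_def rsucc_def rfail_def by (rule refl)

lemma set_redstep:
  assumes "y \<in> set_pmf (redstep \<delta> s x)"
  shows "y = rfail s x \<or> (fst x \<ge> 1 \<and> y = rsucc \<delta> s x)"
proof (cases "fst x = 0")
  case True
  have "bernoulli_pmf 0 = return_pmf False" by (rule pmf_eqI) (case_tac i, auto simp: pmf_return)
  then show ?thesis using assms True by (auto simp: redstep_alt)
next
  case False
  then show ?thesis using assms by (auto simp: redstep_alt)
qed

lemma nn_integral_redstep:
  assumes "snd (snd x) \<ge> 1" and that: "\<And>y. f y \<ge> 0"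
  shows "(\<integral>\<^sup>+y. ennreal (f y) \<partial>redstep \<delta> s x) =
     ennreal (qsucc s (fst x) (snd x) * f (rsucc \<delta> s x) + (1 - qsucc s (fst x) (snd x)) * f (rfail s x))"
proof -
  note q = qsucc_bounds[OF assms(1), of s "fst x"]
  have "(\<integral>\<^sup>+y. ennreal (f y) \<partial>redstep \<delta> s x) =
     ennreal (f (rsucc \<delta> s x)) * ennreal (qsucc s (fst x) (snd x)) + ennreal (f (rfail s x)) * ennreal (1 - qsucc s (fst x) (snd x))"
    unfolding redstep_alt nn_integral_map_pmf using q
    by (subst nn_integral_bernoulli_pmf) auto
  also have "\<dots> = ennreal (qsucc s (fst x) (snd x) * f (rsucc \<delta> s x) + (1 - qsucc s (fst x) (snd x)) * f (rfail s x))"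
    using q that by (simp only: ennreal_plus[symmetric] ennreal_mult[symmetric] mult_nonneg_nonneg diff_ge_0_iff_ge mult.commute)
  finally show ?thesis .
qed

definition rinv :: "real \<Rightarrow> nat \<Rightarrow> nat \<Rightarrow> nat \<times> lstate \<Rightarrow> bool" where
  "rinv \<delta> k t x \<longleftrightarrow> fst x \<le> k \<and> fst (snd x) = k - fst x \<and> snd (snd x) \<ge> \<delta> + 1 \<and>
     snd (snd x) \<ge> (\<delta> + 1) * (real (fst x) + 1 - real k) + real ((t + 1) div 2)"

lemma rinv_step:
  assumes "rinv \<delta> k t x" "y \<in> set_pmf (redstep \<delta> (Suc t) x)" "\<delta> \<ge> 0"
  shows "rinv \<delta> k (Suc t) y"
proof -
  obtain n sg kp where x: "x = (n, sg, kp)" by (cases x) auto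
  have h: "n \<le> k" "sg = k - n" "kp \<ge> \<delta> + 1" "kp \<ge> (\<delta> + 1) * (real n + 1 - real k) + real ((t + 1) div 2)"
    using assms(1) by (auto simp: rinv_def x)
  have dv: "real ((Suc t + 1) div 2) \<le> real ((t + 1) div 2) + 1" 
    "odd (Suc t) \<Longrightarrow> real ((Suc t + 1) div 2) = real ((t + 1) div 2) + 1"
    "even (Suc t) \<Longrightarrow> real ((Suc t + 1) div 2) = real ((t + 1) div 2)" by auto
  from set_redstep[OF assms(2)] show ?thesis
  proof
    assume y: "y = rfail (Suc t) x"
    show ?thesis
    proof (cases "odd (Suc t)")
      case True
      have "tick (Suc t) (sg, kp) = (sg, kp + 1)" using True by (simp add: tick_def)
      then show ?thesis using h dv(2)[OF True] unfolding y rfail_def rinv_def x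
        by (simp del: of_nat_Suc)
    next
      case False
      have "tick (Suc t) (sg, kp) = (sg, kp)" using False by (simp add: tick_def)
      then show ?thesis using h dv(3) False unfolding y rfail_def rinv_def x
        by (simp del: of_nat_Suc)
    qed
  next
    assume a: "fst x \<ge> 1 \<and> y = rsucc \<delta> (Suc t) x"
    then have n1: "n \<ge> 1" and y: "y = rsucc \<delta> (Suc t) x" by (auto simp: x)
    have kk: "snd (recv \<delta> (Suc t) (tick (Suc t) (sg, kp))) \<ge> kp - \<delta>"
      "snd (recv \<delta> (Suc t) (tick (Suc t) (sg, kp))) \<ge> \<delta> + 1"
      by (auto simp: recv_def tick_def)
    have nn: "real (n - 1) = real n - 1" using n1 by simp
    have "fst (recv \<delta> (Suc t) (tick (Suc t) (sg, kp))) = sg + 1"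
      by (simp add: recv_def tick_def)
    moreover have "Suc (k - n) = Suc k - n" using h(1) by (simp add: Suc_diff_le)
    ultimately show ?thesis using h dv(1) n1 kk nn unfolding y rsucc_def rinv_def x
      by (simp del: of_nat_Suc add: algebra_simps)
  qed
qed

lemma rinv_run:
  assumes "\<delta> \<ge> 0"
  shows "\<forall>x \<in> set_pmf (red_run \<delta> k t). rinv \<delta> k t x"
proof (induction t)
  case 0
  then show ?case by (simp add: rinv_def)
next
  case (Suc t)
  then show ?case using rinv_step[OF _ _ assms] by auto
qed

lemma supermart:
  fixes F :: "nat \<Rightarrow> nat \<times> lstate \<Rightarrow> real"
  assumes nonneg: "\<And>t x. 0 \<le> F t x" and eps: "\<epsilon> \<ge> 0"
    and step: "\<And>t x. rinv \<delta> k t x \<Longrightarrow>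
        qsucc (Suc t) (fst x) (snd x) * F (Suc t) (rsucc \<delta> (Suc t) x) +
        (1 - qsucc (Suc t) (fst x) (snd x)) * F (Suc t) (rfail (Suc t) x) \<le> F t x + \<epsilon>"
    and d: "\<delta> \<ge> 0"
  shows "(\<integral>\<^sup>+y. ennreal (F T y) \<partial>red_run \<delta> k T) \<le> ennreal (F 0 (k, 0, \<delta> + 1) + real T * \<epsilon>)"
proof (induction T)
  case 0
  then show ?case using nonneg by simp
next
  case (Suc T)
  have "(\<integral>\<^sup>+y. ennreal (F (Suc T) y) \<partial>red_run \<delta> k (Suc T)) =
       (\<integral>\<^sup>+x. (\<integral>\<^sup>+y. ennreal (F (Suc T) y) \<partial>redstep \<delta> (Suc T) x) \<partial>red_run \<delta> k T)"
    by simp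
  also have "\<dots> \<le> (\<integral>\<^sup>+x. ennreal (F T x) + ennreal \<epsilon> \<partial>red_run \<delta> k T)"
  proof (rule nn_integral_mono_AE)
    show "AE x in measure_pmf (red_run \<delta> k T). (\<integral>\<^sup>+y. ennreal (F (Suc T) y) \<partial>redstep \<delta> (Suc T) x) \<le> ennreal (F T x) + ennreal \<epsilon>"
    proof (subst AE_measure_pmf_iff, intro ballI)
      fix x assume "x \<in> set_pmf (red_run \<delta> k T)"
      then have r: "rinv \<delta> k T x" using rinv_run[OF d] by auto
      then have "snd (snd x) \<ge> 1" using d by (auto simp: rinv_def)
      then have "(\<integral>\<^sup>+y. ennreal (F (Suc T) y) \<partial>redstep \<delta> (Suc T) x) = ennreal (qsucc (Suc T) (fst x) (snd x) * F (Suc T) (rsucc \<delta> (Suc T) x) +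
        (1 - qsucc (Suc T) (fst x) (snd x)) * F (Suc T) (rfail (Suc T) x))"
        using nn_integral_redstep nonneg by blast
      also have "\<dots> \<le> ennreal (F T x + \<epsilon>)" using step[OF r] by (rule ennreal_leI)
      also have "\<dots> = ennreal (F T x) + ennreal \<epsilon>" using nonneg eps by (intro ennreal_plus) auto
      finally show "(\<integral>\<^sup>+y. ennreal (F (Suc T) y) \<partial>redstep \<delta> (Suc T) x) \<le> ennreal (F T x) + ennreal \<epsilon>" .
    qed
  qed
  also have "\<dots> = (\<integral>\<^sup>+x. ennreal (F T x) \<partial>red_run \<delta> k T) + ennreal \<epsilon>"
    by (subst nn_integral_add) (simp_all add: measure_pmf.emeasure_space_1)
  also have "\<dots> \<le> ennreal (F 0 (k, 0, \<delta> + 1) + real T * \<epsilon>) + ennreal \<epsilon>"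
    using Suc by (intro add_right_mono)
  also have "\<dots> = ennreal (F 0 (k, 0, \<delta> + 1) + real T * \<epsilon> + \<epsilon>)"
    using nonneg[of 0] eps by (intro ennreal_plus[symmetric]) auto
  also have "F 0 (k, 0, \<delta> + 1) + real T * \<epsilon> + \<epsilon> = F 0 (k, 0, \<delta> + 1) + real (Suc T) * \<epsilon>"
    by (simp add: algebra_simps)
  finally show ?case .
qed

lemma markov_fail:
  fixes F :: "nat \<Rightarrow> nat \<times> lstate \<Rightarrow> real"
  assumes nonneg: "\<And>t x. 0 \<le> F t x" and eps: "\<epsilon> \<ge> 0"
    and step: "\<And>t x. rinv \<delta> k t x \<Longrightarrow>
        qsucc (Suc t) (fst x) (snd x) * F (Suc t) (rsucc \<delta> (Suc t) x) +
        (1 - qsucc (Suc t) (fst x) (snd x)) * F (Suc t) (rfail (Suc t) x) \<le> F t x + \<epsilon>"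
    and d: "\<delta> \<ge> 0"
    and M: "M > 0"
    and big: "\<And>x. rinv \<delta> k T x \<Longrightarrow> fst x \<noteq> 0 \<Longrightarrow> F T x \<ge> M"
  shows "measure_pmf.prob (red_run \<delta> k T) {x. fst x = 0} \<ge> 1 - (F 0 (k, 0, \<delta> + 1) + real T * \<epsilon>) / M"
proof -
  let ?R = "red_run \<delta> k T"
  have "emeasure ?R {x. fst x \<noteq> 0} = (\<integral>\<^sup>+y. indicator {x. fst x \<noteq> 0} y \<partial>?R)" by simp
  also have "\<dots> \<le> (\<integral>\<^sup>+y. ennreal (F T y / M) \<partial>?R)"
  proof (rule nn_integral_mono_AE, subst AE_measure_pmf_iff, intro ballI)
    fix y assume "y \<in> set_pmf ?R"
    then have r: "rinv \<delta> k T y" using rinv_run[OF d] by auto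
    show "indicator {x. fst x \<noteq> 0} y \<le> ennreal (F T y / M)"
    proof (cases "fst y = 0")
      case False
      then have "F T y / M \<ge> 1" using big[OF r] M by simp
      then show ?thesis using False by (simp add: ennreal_leI)
    qed simp
  qed
  also have "\<dots> = (\<integral>\<^sup>+y. ennreal (F T y) / ennreal M \<partial>?R)"
    using M nonneg by (intro nn_integral_cong) (simp add: divide_ennreal)
  also have "\<dots> = (\<integral>\<^sup>+y. ennreal (F T y) \<partial>?R) / ennreal M"
    by (rule nn_integral_divide) simp
  also have "\<dots> \<le> ennreal (F 0 (k, 0, \<delta> + 1) + real T * \<epsilon>) / ennreal M"
    by (intro divide_right_mono_ennreal supermart[OF nonneg eps step d])
  also have "\<dots> = ennreal ((F 0 (k, 0, \<delta> + 1) + real T * \<epsilon>) / M)"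
    using M nonneg[of 0] eps by (intro divide_ennreal) auto
  finally have "measure_pmf.prob ?R {x. fst x \<noteq> 0} \<le> (F 0 (k, 0, \<delta> + 1) + real T * \<epsilon>) / M"
    using M nonneg[of 0] eps by (simp add: measure_pmf.emeasure_eq_measure ennreal_le_iff)
  moreover have "measure_pmf.prob ?R {x. fst x = 0} = 1 - measure_pmf.prob ?R {x. fst x \<noteq> 0}"
    using measure_pmf.prob_compl[of "{x. fst x \<noteq> 0}" ?R] by (simp add: Compl_eq_Diff_UNIV[symmetric] Compl_eq)
  ultimately show ?thesis by simp
qed

lemma conv_mono:
  fixes q qm a b :: real
  assumes "0 \<le> qm" "qm \<le> q" "q \<le> 1" "a \<le> b"
  shows "q * a + (1 - q) * b \<le> qm * a + (1 - qm) * b"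
proof -
  have "q * a + (1 - q) * b = b - q * (b - a)" by (simp add: algebra_simps)
  also have "\<dots> \<le> b - qm * (b - a)" using assms by (intro diff_left_mono mult_right_mono) auto
  also have "\<dots> = qm * a + (1 - qm) * b" by (simp add: algebra_simps)
  finally show ?thesis .
qed

lemma exp_le_1_2x: "0 \<le> x \<Longrightarrow> x \<le> 1 \<Longrightarrow> exp x \<le> 1 + 2 * (x::real)"
proof -
  assume a: "0 \<le> x" "x \<le> 1"
  have "exp x \<le> 1 + x + x\<^sup>2" using exp_bound a by blast
  also have "x\<^sup>2 \<le> x" using a by (simp add: power2_eq_square mult_left_le)
  finally show ?thesis by simp
qed

lemma exp_neg_le_inv: fixes y :: real shows "0 \<le> y \<Longrightarrow> exp (- y) \<le> 1 / (1 + y)"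
proof -
  assume "0 \<le> y"
  have "1 + y \<le> exp y" by simp
  then have "1 / exp y \<le> 1 / (1 + y)" using \<open>0 \<le> y\<close> by (intro divide_left_mono) auto
  then show ?thesis by (simp add: exp_minus field_simps)
qed

lemma exp_neg_half: fixes y :: real shows "0 \<le> y \<Longrightarrow> y \<le> 1 \<Longrightarrow> exp (- y) \<le> 1 - y / 2"
proof -
  assume a: "0 \<le> y" "y \<le> 1"
  have yy: "y * y \<le> y" using a by (simp add: mult_left_le)
  have "(1 + y) * (1 - y / 2) = 1 + (y - y * y) / 2" by (simp add: field_simps)
  also have "\<dots> \<ge> 1" using yy by simp
  finally have "1 \<le> (1 + y) * (1 - y / 2)" .
  then have "1 / (1 + y) \<le> 1 - y / 2"
    using a by (simp add: divide_le_eq mult.commute)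
  then show ?thesis using exp_neg_le_inv[OF a(1)] by linarith
qed

lemma exp_neg_quad: fixes y :: real shows "0 \<le> y \<Longrightarrow> exp (- y) \<le> 1 - y + y\<^sup>2"
proof -
  assume a: "0 \<le> y"
  have "1 / (1 + y) \<le> 1 - y + y\<^sup>2"
  proof -
    have "(1 + y) * (1 - y + y\<^sup>2) = 1 + y ^ 3" by (simp add: algebra_simps power2_eq_square power3_eq_cube)
    also have "\<dots> \<ge> 1" using a by simp
    finally show ?thesis using a by (simp add: divide_le_eq mult.commute)
  qed
  then show ?thesis using exp_neg_le_inv[OF a] by linarith
qed

text \<open>Drift inequality for the final (BT-driven) phase.\<close>
lemma drift2:
  fixes qm lam E :: real
  assumes "0 < qm" "qm \<le> 1" "0 < lam" "lam \<le> qm / 4"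
  shows "qm * exp (lam * (E - 4 / qm)) + (1 - qm) * exp (lam * (E + 1)) \<le> exp (lam * E)"
proof -
  have y: "0 \<le> lam * (4 / qm)" "lam * (4 / qm) \<le> 1"
    using assms by (auto simp: field_simps)
  have e1: "exp (- (lam * (4 / qm))) \<le> 1 - lam * (4 / qm) / 2" by (rule exp_neg_half[OF y])
  have e2: "exp lam \<le> 1 + 2 * lam" using assms by (intro exp_le_1_2x) auto
  have "qm * exp (lam * (E - 4 / qm)) + (1 - qm) * exp (lam * (E + 1)) =
        exp (lam * E) * (qm * exp (- (lam * (4 / qm))) + (1 - qm) * exp lam)"
    by (simp add: algebra_simps exp_add[symmetric] exp_diff)
  also have "qm * exp (- (lam * (4 / qm))) + (1 - qm) * exp lam \<le> qm * (1 - lam * (4 / qm) / 2) + (1 - qm) * (1 + 2 * lam)"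
    using assms e1 e2 by (intro add_mono mult_left_mono) auto
  also have "\<dots> = 1 - 2 * lam * qm" using assms by (simp add: field_simps)
  also have "\<dots> \<le> 1" using assms by simp
  finally show ?thesis by simp
qed

text \<open>Drift inequality for the main (AT-driven) phase.\<close>
lemma drift1:
  fixes r0 d lam :: real
  assumes "0 \<le> r0" "r0 \<le> 1" "d \<ge> 1" "r0 * d > 1" "0 < lam" "lam \<le> 1" "lam \<le> (r0 * d - 1) / d\<^sup>2"
  shows "r0 * exp (- (lam * (d - 1))) + (1 - r0) * exp lam \<le> 1"
proof -
  have e1: "exp (- (lam * (d - 1))) \<le> 1 - lam * (d - 1) + (lam * (d - 1))\<^sup>2"
    using assms by (intro exp_neg_quad) auto
  have e2: "exp lam \<le> 1 + lam + lam\<^sup>2" using assms exp_bound by auto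
  have "r0 * exp (- (lam * (d - 1))) + (1 - r0) * exp lam \<le>
      r0 * (1 - lam * (d - 1) + (lam * (d - 1))\<^sup>2) + (1 - r0) * (1 + lam + lam\<^sup>2)"
    using assms e1 e2 by (intro add_mono mult_left_mono) auto
  also have "\<dots> = 1 + lam * (1 - r0 * d) + lam\<^sup>2 * (r0 * (d - 1)\<^sup>2 + (1 - r0))"
    by (simp add: algebra_simps power2_eq_square)
  finally have X: "r0 * exp (- (lam * (d - 1))) + (1 - r0) * exp lam \<le> 1 + lam * (1 - r0 * d) + lam\<^sup>2 * (r0 * (d - 1)\<^sup>2 + (1 - r0))" .
  have Z: "r0 * (d - 1)\<^sup>2 + (1 - r0) \<le> d\<^sup>2"
  proof -
    have "r0 * (d - 1)\<^sup>2 + (1 - r0) \<le> (d - 1)\<^sup>2 + 1"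
      using assms by (smt (verit) mult_left_le_one_le zero_le_power2)
    also have "\<dots> \<le> d\<^sup>2" using assms by (simp add: power2_eq_square algebra_simps)
    finally show ?thesis .
  qed
  have Y1: "lam\<^sup>2 * (r0 * (d - 1)\<^sup>2 + (1 - r0)) \<le> lam\<^sup>2 * d\<^sup>2"
    using Z by (intro mult_left_mono) auto
  have "lam\<^sup>2 * d\<^sup>2 = lam * (lam * d\<^sup>2)" by (simp add: power2_eq_square)
  also have "lam * (lam * d\<^sup>2) \<le> lam * (r0 * d - 1)"
    using assms by (intro mult_left_mono) (auto simp: field_simps)
  finally have Y2: "lam\<^sup>2 * d\<^sup>2 \<le> lam * (r0 * d - 1)" .
  have "1 + lam * (1 - r0 * d) + lam * (r0 * d - 1) = 1" by (simp add: algebra_simps)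
  then show ?thesis using X Y1 Y2 by linarith
qed
lemma pow_ge_exp_neg1:
  fixes kp :: real and n :: nat
  assumes "1 \<le> n" "real n \<le> kp" "1 < kp"
  shows "(1 - 1 / kp) ^ (n - 1) \<ge> exp (- 1)"
proof -
  define b where "b = 1 - 1 / kp"
  have b0: "0 < b" "b < 1" using assms by (auto simp: b_def field_simps)
  have "b ^ (n - 1) = b powr real (n - 1)" using b0 by (simp add: powr_realpow)
  also have "\<dots> \<ge> b powr (kp - 1)"
    using assms b0 by (intro powr_mono') (auto simp: of_nat_diff)
  also have "b powr (kp - 1) = exp ((kp - 1) * ln b)" using b0 by (simp add: powr_def)
  also have "(kp - 1) * ln b \<ge> -1"
  proof -
    have "b = 1 / (1 + 1 / (kp - 1))" using assms by (simp add: b_def field_simps)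
    then have "ln b = - ln (1 + 1 / (kp - 1))" using assms by (simp add: ln_div)
    moreover have "ln (1 + 1 / (kp - 1)) \<le> 1 / (kp - 1)" using assms by (intro ln_add_one_self_le_self) auto
    ultimately have "ln b \<ge> - (1 / (kp - 1))" by linarith
    then have "(kp - 1) * ln b \<ge> (kp - 1) * (- (1 / (kp - 1)))" using assms by (intro mult_left_mono) auto
    then show ?thesis using assms by simp
  qed
  then have "exp ((kp - 1) * ln b) \<ge> exp (- 1)" by simp
  finally show ?thesis by (simp add: b_def)
qed

lemma powr_step:
  fixes kp k1 gam q :: real
  assumes "1 \<le> kp" "0 < k1" "0 \<le> gam" "gam / kp \<le> q" "q \<le> 1"
  shows "(1 - q) * ((kp + 1) / k1) powr gam \<le> (kp / k1) powr gam"
proof -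
  have "(kp + 1) / k1 = (kp / k1) * (1 + 1 / kp)" using assms by (simp add: field_simps)
  moreover have "((kp / k1) * (1 + 1 / kp)) powr gam = (kp / k1) powr gam * (1 + 1 / kp) powr gam"
    by (rule powr_mult)
  ultimately have "((kp + 1) / k1) powr gam = (kp / k1) powr gam * (1 + 1 / kp) powr gam"
    by metis
  also have "(1 + 1 / kp) powr gam \<le> exp (gam / kp)"
  proof -
    have "0 < 1 / kp" using assms by simp
    then have "0 < 1 + 1 / kp" by linarith
    then have "(1 + 1 / kp) powr gam = exp (gam * ln (1 + 1 / kp))" by (simp add: powr_def)
    also have "\<dots> \<le> exp (gam * (1 / kp))"
      unfolding exp_le_cancel_iff using assms by (intro mult_left_mono ln_add_one_self_le_self) auto
    finally show ?thesis by simp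
  qed
  then have "(kp / k1) powr gam * (1 + 1 / kp) powr gam \<le> (kp / k1) powr gam * exp (gam / kp)"
    by (intro mult_left_mono) auto
  finally have A: "((kp + 1) / k1) powr gam \<le> (kp / k1) powr gam * exp (gam / kp)" .
  have B: "(1 - q) * exp (gam / kp) \<le> 1"
  proof -
    have "(1 - q) * exp (gam / kp) \<le> (1 - gam / kp) * exp (gam / kp)"
      using assms by (intro mult_right_mono) auto
    also have "\<dots> \<le> exp (- (gam / kp)) * exp (gam / kp)"
      using exp_minus_ge[of "gam / kp"] by (intro mult_right_mono) auto
    also have "\<dots> = 1" by (simp add: exp_minus field_simps)
    finally show ?thesis .
  qed
  have "(1 - q) * ((kp + 1) / k1) powr gam \<le> (1 - q) * ((kp / k1) powr gam * exp (gam / kp))"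
    using A assms by (intro mult_left_mono) auto
  also have "\<dots> = (kp / k1) powr gam * ((1 - q) * exp (gam / kp))" by simp
  also have "\<dots> \<le> (kp / k1) powr gam * 1" using B by (intro mult_left_mono) auto
  finally show ?thesis by simp
qed

lemma q_AT:
  assumes "odd s" "1 \<le> n" "real n \<le> kp" "1 < kp"
  shows "qsucc s n (sg, kp) \<ge> (real n / kp) * exp (- 1)"
proof -
  have "qsucc s n (sg, kp) = (real n / kp) * (1 - 1 / kp) ^ (n - 1)"
    using assms by (simp add: qsucc_def txprob_def)
  also have "\<dots> \<ge> (real n / kp) * exp (- 1)"
    using pow_ge_exp_neg1[OF assms(2-4)] assms by (intro mult_left_mono) auto
  finally show ?thesis .
qed

lemma q_AT0:
  assumes "odd s" "1 \<le> n" "\<delta> + 1 \<le> kp" "0 < \<delta>"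
  shows "qsucc s n (sg, kp) \<ge> (1 / kp) * (\<delta> / (\<delta> + 1)) ^ (n - 1)"
proof -
  have kp: "0 < kp" using assms by simp
  have b: "\<delta> / (\<delta> + 1) \<le> 1 - 1 / kp"
  proof -
    have "1 / kp \<le> 1 / (\<delta> + 1)" using assms by (intro divide_left_mono) auto
    moreover have "\<delta> / (\<delta> + 1) = 1 - 1 / (\<delta> + 1)" using assms by (simp add: field_simps)
    ultimately show ?thesis by simp
  qed
  have "qsucc s n (sg, kp) = real n * (1 / kp) * (1 - 1 / kp) ^ (n - 1)"
    using assms by (simp add: qsucc_def txprob_def)
  also have "\<dots> \<ge> 1 * (1 / kp) * (\<delta> / (\<delta> + 1)) ^ (n - 1)"
    using assms kp b by (intro mult_mono power_mono) auto
  finally show ?thesis by simp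
qed

lemma q_BT0:
  assumes "even s" "2 \<le> n"
  shows "qsucc s n (0, kp) = 0"
  using assms by (simp add: qsucc_def txprob_def)

lemma q_BT:
  assumes "even s" "1 \<le> n" "n \<le> N" "N < k" "sg = k - n"
  shows "qsucc s n (sg, kp) \<ge> (1 / (1 + log 2 (real k))) * (1 - 1 / (1 + log 2 (real (k - N + 1)))) ^ N"
proof -
  define p where "p = 1 / (1 + log 2 (real sg + 1))"
  have sg1: "real sg + 1 \<le> real k" "real (k - N + 1) \<le> real sg + 1" "2 \<le> real (k - N + 1)"
    using assms by auto
  have l1: "log 2 (real sg + 1) \<le> log 2 (real k)" using sg1 by (intro log_le_cancel_iff[THEN iffD2]) auto
  have l2: "log 2 (real (k - N + 1)) \<le> log 2 (real sg + 1)" using sg1 by (intro log_le_cancel_iff[THEN iffD2]) auto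
  have l3: "1 \<le> log 2 (real (k - N + 1))" using sg1 by (simp add: le_log_iff)
  have l4: "1 \<le> log 2 (real sg + 1)" "1 \<le> log 2 (real k)" using l1 l2 l3 by linarith+
  have pp: "0 < (1 + log 2 (real k)) * (1 + log 2 (real sg + 1))" using l4 by (intro mult_pos_pos) linarith+
  have plo: "1 / (1 + log 2 (real k)) \<le> p" unfolding p_def using l1 l4 pp by (intro divide_left_mono) auto
  have pp2: "0 < (1 + log 2 (real sg + 1)) * (1 + log 2 (real (k - N + 1)))" using l4 l3 by (intro mult_pos_pos) linarith+
  have phi: "p \<le> 1 / (1 + log 2 (real (k - N + 1)))" unfolding p_def using l2 l3 l4 pp2 by (intro divide_left_mono) linarith+
  have aux: "\<And>x::real. 1 \<le> x \<Longrightarrow> 1 / (1 + x) \<le> 1" by (simp add: divide_le_eq)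
  have aux0: "\<And>x::real. 1 \<le> x \<Longrightarrow> 0 \<le> 1 / (1 + x)" by simp
  have phi2: "1 / (1 + log 2 (real (k - N + 1))) \<le> 1" using aux[OF l3] .
  have p0: "0 \<le> p" unfolding p_def using aux0[OF l4(1)] .
  have "qsucc s n (sg, kp) = real n * p * (1 - p) ^ (n - 1)"
    using assms by (simp add: qsucc_def txprob_def p_def)
  also have "\<dots> \<ge> 1 * p * (1 - p) ^ N"
  proof (intro mult_mono)
    show "(1 - p) ^ N \<le> (1 - p) ^ (n - 1)"
      using p0 phi phi2 assms by (intro power_decreasing) auto
  qed (use assms p0 phi phi2 in auto)
  also have "1 * p * (1 - p) ^ N \<ge> (1 / (1 + log 2 (real k))) * (1 - 1 / (1 + log 2 (real (k - N + 1)))) ^ N"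
    using plo phi phi2 p0 l1 l3 by (intro mult_mono power_mono) auto
  finally show ?thesis by linarith
qed

lemma rfail_eq: "rfail s (n, sg, kp) = (n, sg, kp + (if odd s then 1 else 0))"
  by (simp add: rfail_def tick_def)

lemma rsucc_eq: "rsucc \<delta> s (n, sg, kp) = (n - 1, sg + 1, max (kp - \<delta>) (\<delta> + 1))"
  by (simp add: rsucc_def tick_def recv_def)

lemma conv_le:
  fixes q S Fv B :: real
  assumes "0 \<le> q" "q \<le> 1" "S \<le> B" "Fv \<le> B"
  shows "q * S + (1 - q) * Fv \<le> B"
proof -
  have "q * S + (1 - q) * Fv \<le> q * B + (1 - q) * B"
    using assms by (intro add_mono mult_left_mono) auto
  then show ?thesis by (simp add: algebra_simps)
qed

definition F2 :: "real \<Rightarrow> real \<Rightarrow> real \<Rightarrow> real \<Rightarrow> nat \<Rightarrow> nat \<Rightarrow> real \<Rightarrow> real" where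
  "F2 lam g Dl M t n kp = min (exp (lam * (kp + (1 + g) * real n - Dl - (if odd t then 1 else 0)))) M"

lemma F2_nonneg: "M \<ge> 0 \<Longrightarrow> F2 lam g Dl M t n kp \<ge> 0"
  by (simp add: F2_def)

lemma P2_step:
  fixes q S Fv :: real
  assumes n1: "1 \<le> n" and kp: "\<delta> + 1 \<le> kp" and d: "0 \<le> \<delta>" and M: "0 < M"
    and qm: "0 < qm" "qm \<le> 1" and g: "g = 4 / qm" and lam: "0 < lam" "lam \<le> qm / 4"
    and q: "0 \<le> q" "q \<le> 1" and qbt: "even (Suc t) \<Longrightarrow> qm \<le> q"
    and S: "0 \<le> S" "S \<le> F2 lam g Dl M (Suc t) (n - 1) (max (kp - \<delta>) (\<delta> + 1))"
    and Fv: "Fv = F2 lam g Dl M (Suc t) n (kp + (if odd (Suc t) then 1 else 0))"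
  shows "q * S + (1 - q) * Fv \<le> F2 lam g Dl M t n kp"
proof -
  have g0: "0 \<le> g" using g qm by simp
  have kk: "max (kp - \<delta>) (\<delta> + 1) \<le> kp" using kp d by simp
  have nn: "real (n - 1) = real n - 1" using n1 by simp
  show ?thesis
  proof (cases "odd (Suc t)")
    case True
    then have et: "\<not> odd t" by simp
    have "Fv = F2 lam g Dl M t n kp" using True et by (simp add: Fv F2_def algebra_simps)
    moreover have "S \<le> F2 lam g Dl M t n kp"
    proof -
      have "lam * (max (kp - \<delta>) (\<delta> + 1) + (1 + g) * real (n - 1) - Dl - 1) \<le> lam * (kp + (1 + g) * real n - Dl - 0)"
        using kk g0 lam nn by (intro mult_left_mono) (auto simp: algebra_simps)
      then have "F2 lam g Dl M (Suc t) (n - 1) (max (kp - \<delta>) (\<delta> + 1)) \<le> F2 lam g Dl M t n kp"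
        using True et unfolding F2_def by (intro min.mono) auto
      then show ?thesis using S by linarith
    qed
    ultimately show ?thesis using q S by (intro conv_le) auto
  next
    case False
    then have ot: "odd t" by simp
    define E where "E = kp + (1 + g) * real n - Dl - 1"
    have cur: "F2 lam g Dl M t n kp = min (exp (lam * E)) M" using ot by (simp add: F2_def E_def)
    have fv: "Fv = min (exp (lam * (E + 1))) M" using False by (simp add: Fv F2_def E_def algebra_simps)
    have sv: "S \<le> min (exp (lam * (E - g))) M"
    proof -
      have "lam * (max (kp - \<delta>) (\<delta> + 1) + (1 + g) * real (n - 1) - Dl - 0) \<le> lam * (E - g)"
        using kk g0 lam nn by (intro mult_left_mono) (auto simp: algebra_simps E_def)
      then have "F2 lam g Dl M (Suc t) (n - 1) (max (kp - \<delta>) (\<delta> + 1)) \<le> min (exp (lam * (E - g))) M"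
        using False unfolding F2_def by (intro min.mono) auto
      then show ?thesis using S by linarith
    qed
    show ?thesis
    proof (cases "exp (lam * E) \<le> M")
      case False
      then have "F2 lam g Dl M t n kp = M" using cur by simp
      then show ?thesis using fv sv q S by (intro conv_le) auto
    next
      case True
      have "q * S + (1 - q) * Fv \<le> q * exp (lam * (E - g)) + (1 - q) * exp (lam * (E + 1))"
        using sv fv q by (intro add_mono mult_left_mono) auto
      also have "\<dots> \<le> qm * exp (lam * (E - g)) + (1 - qm) * exp (lam * (E + 1))"
      proof (rule conv_mono)
        show "exp (lam * (E - g)) \<le> exp (lam * (E + 1))" using lam g0 by (simp add: mult_left_mono)
      qed (use qm q qbt False in auto)
      also have "\<dots> \<le> exp (lam * E)" unfolding g by (rule drift2) (use qm lam in auto)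
      also have "\<dots> = F2 lam g Dl M t n kp" using cur True by simp
      finally show ?thesis .
    qed
  qed
qed

lemma cross_le:
  fixes a b c d :: real
  assumes "0 < b" "0 < d" "a * d \<le> c * b"
  shows "a / b \<le> c / d"
proof -
  have "a / b = (a * d) / (b * d)" using assms by simp
  also have "\<dots> \<le> (c * b) / (b * d)" using assms by (intro divide_right_mono) auto
  also have "\<dots> = c / d" using assms by simp
  finally show ?thesis .
qed

definition F1 :: "real \<Rightarrow> real \<Rightarrow> nat \<Rightarrow> real \<Rightarrow> real" where
  "F1 lam M n kp = min (exp (lam * (kp - real n))) M + 1"

lemma P1_step:
  fixes q S Fv :: real
  assumes n: "m < n" and m: "2 * \<delta> + 2 \<le> real m" and kp: "\<delta> + 1 \<le> kp" and d: "1 \<le> \<delta>" and M: "1 \<le> M"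
    and lam: "0 < lam" and W: "W = ln M / lam"
    and r0: "0 \<le> r0" "r0 \<le> 1" "r0 * exp (- (lam * (\<delta> - 1))) + (1 - r0) * exp lam \<le> 1"
    and rho: "r0 * exp 1 \<le> real m / (real m + W)"
    and qdef: "q = qsucc (Suc t) n (sg, kp)"
    and S: "0 \<le> S" "S \<le> min (exp (lam * (max (kp - \<delta>) (\<delta> + 1) - real (n - 1)))) M + 1"
    and Fv: "Fv = F1 lam M n (kp + (if odd (Suc t) then 1 else 0))"
  shows "q * S + (1 - q) * Fv \<le> F1 lam M n kp + exp lam"
proof -
  have q: "0 \<le> q" "q \<le> 1" using qsucc_bounds[of "(sg, kp)"] qdef kp d by auto
  have nn: "real (n - 1) = real n - 1" using n by simp
  have mpos: "0 < real m" using m d by simp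
  have W0: "0 \<le> W" using M lam W by simp
  show ?thesis
  proof (cases "kp < real n")
    case True
    have "S \<le> exp lam + 1"
    proof -
      have "max (kp - \<delta>) (\<delta> + 1) \<le> kp" using kp d by simp
      then have "lam * (max (kp - \<delta>) (\<delta> + 1) - real (n - 1)) \<le> lam * 1"
        using True nn lam by (intro mult_left_mono) auto
      then have "exp (lam * (max (kp - \<delta>) (\<delta> + 1) - real (n - 1))) \<le> exp lam" by simp
      then show ?thesis using S by linarith
    qed
    moreover have "Fv \<le> exp lam + 1"
    proof -
      have "lam * (kp + (if odd (Suc t) then 1 else 0) - real n) \<le> lam * 1"
        using True lam by (intro mult_left_mono) auto
      then have "exp (lam * (kp + (if odd (Suc t) then 1 else 0) - real n)) \<le> exp lam" by simp
      then show ?thesis unfolding Fv F1_def by linarith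
    qed
    moreover have "1 \<le> F1 lam M n kp" using M by (simp add: F1_def)
    ultimately show ?thesis using q by (intro conv_le) auto
  next
    case False
    then have kn: "real n \<le> kp" by simp
    have nm: "real m + 1 \<le> real n" using n by simp
    have kbig: "2 * \<delta> + 3 \<le> kp" using kn nm m by linarith
    have kk: "max (kp - \<delta>) (\<delta> + 1) = kp - \<delta>" using kbig by simp
    show ?thesis
    proof (cases "exp (lam * (kp - real n)) \<le> M")
      case False
      then have cur: "F1 lam M n kp = M + 1" by (simp add: F1_def)
      have "S \<le> M + 1" using S by linarith
      moreover have "Fv \<le> M + 1" by (simp add: Fv F1_def)
      moreover have "0 < exp lam" by simp
      ultimately show ?thesis using q cur by (intro conv_le) linarith+
    next
      case True
      then have cur: "F1 lam M n kp = exp (lam * (kp - real n)) + 1" by (simp add: F1_def)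
      show ?thesis
      proof (cases "odd (Suc t)")
        case False
        have "S \<le> F1 lam M n kp"
        proof -
          have "lam * (kp - \<delta> - real (n - 1)) \<le> lam * (kp - real n)"
            using nn d lam by (intro mult_left_mono) auto
          then have "exp (lam * (kp - \<delta> - real (n - 1))) \<le> exp (lam * (kp - real n))" by simp
          moreover have "min (exp (lam * (max (kp - \<delta>) (\<delta> + 1) - real (n - 1)))) M \<le> exp (lam * (kp - \<delta> - real (n - 1)))"
            using kk by simp
          ultimately show ?thesis using S cur by linarith
        qed
        moreover have "Fv = F1 lam M n kp" using False by (simp add: Fv)
        moreover have "0 < exp lam" by simp
        ultimately show ?thesis using q by (intro conv_le) linarith+
      next
        case True
        define Psi where "Psi = kp - real n"
        have Psi0: "0 \<le> Psi" using kn by (simp add: Psi_def)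
        have PsiW: "Psi \<le> W"
        proof -
          have "exp (lam * Psi) \<le> M" using \<open>exp (lam * (kp - real n)) \<le> M\<close> by (simp add: Psi_def)
          then have "ln (exp (lam * Psi)) \<le> ln M" using M by (subst ln_le_cancel_iff) auto
          then have "lam * Psi \<le> ln M" by simp
          then show ?thesis unfolding W using lam by (simp add: pos_le_divide_eq mult.commute)
        qed
        have sv: "S \<le> exp (lam * (Psi + 1 - \<delta>)) + 1"
        proof -
          have "min (exp (lam * (max (kp - \<delta>) (\<delta> + 1) - real (n - 1)))) M \<le> exp (lam * (kp - \<delta> - real (n - 1)))"
            using kk by simp
          moreover have "kp - \<delta> - real (n - 1) = Psi + 1 - \<delta>" using nn by (simp add: Psi_def)
          then have "exp (lam * (kp - \<delta> - real (n - 1))) = exp (lam * (Psi + 1 - \<delta>))" by (simp only:)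
          ultimately show ?thesis using S by linarith
        qed
        have fv: "Fv \<le> exp (lam * (Psi + 1)) + 1"
        proof -
          have "Fv = min (exp (lam * (kp + 1 - real n))) M + 1" using True by (simp add: Fv F1_def)
          moreover have "kp + 1 - real n = Psi + 1" by (simp add: Psi_def)
          ultimately show ?thesis by simp
        qed
        have qr: "r0 \<le> q"
        proof -
          have kp0: "0 < kp" using kbig d by simp
          have q1: "q \<ge> (real n / kp) * exp (- 1)"
            unfolding qdef using q_AT[OF True, of n kp sg] n kn kbig d by auto
          have f1: "real m / (real m + W) \<le> real n / (real n + W)"
          proof (rule cross_le)
            have "W * real m \<le> W * real n" using nm W0 by (intro mult_left_mono) auto
            then show "real m * (real n + W) \<le> real n * (real m + W)"
              by (simp add: algebra_simps)
          qed (use mpos W0 nm in auto)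
          have f2: "real n / (real n + W) \<le> real n / kp"
            using PsiW kp0 by (intro divide_left_mono) (auto simp: Psi_def)
          have "real m / (real m + W) * exp (- 1) \<le> (real n / kp) * exp (- 1)"
            using f1 f2 by (intro mult_right_mono) auto
          moreover have "r0 \<le> real m / (real m + W) * exp (- 1)"
          proof -
            have "r0 = (r0 * exp 1) * exp (- 1)" by (simp add: exp_minus)
            also have "\<dots> \<le> real m / (real m + W) * exp (- 1)" using rho by (intro mult_right_mono) auto
            finally show ?thesis .
          qed
          ultimately show ?thesis using q1 by linarith
        qed
        have "q * S + (1 - q) * Fv \<le> q * (exp (lam * (Psi + 1 - \<delta>)) + 1) + (1 - q) * (exp (lam * (Psi + 1)) + 1)"
          using sv fv q by (intro add_mono mult_left_mono) auto
        also have "\<dots> \<le> r0 * (exp (lam * (Psi + 1 - \<delta>)) + 1) + (1 - r0) * (exp (lam * (Psi + 1)) + 1)"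
        proof (rule conv_mono)
          show "exp (lam * (Psi + 1 - \<delta>)) + 1 \<le> exp (lam * (Psi + 1)) + 1" using lam d by simp
        qed (use r0 q qr in auto)
        also have "\<dots> = exp (lam * Psi) * (r0 * exp (- (lam * (\<delta> - 1))) + (1 - r0) * exp lam) + 1"
        proof -
          have a: "exp (lam * (Psi + 1 - \<delta>)) = exp (lam * Psi) * exp (- (lam * (\<delta> - 1)))"
            by (simp only: exp_add[symmetric]) (simp add: algebra_simps)
          have b: "exp (lam * (Psi + 1)) = exp (lam * Psi) * exp lam"
            by (simp only: exp_add[symmetric]) (simp add: algebra_simps)
          show ?thesis unfolding a b by (simp add: algebra_simps)
        qed
        also have "\<dots> \<le> exp (lam * Psi) * 1 + 1"
          using r0 by (intro add_right_mono mult_left_mono) auto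
        also have "\<dots> = F1 lam M n kp" using cur by (simp add: Psi_def)
        finally have "q * S + (1 - q) * Fv \<le> F1 lam M n kp" .
        moreover have "0 < exp lam" by simp
        ultimately show ?thesis by linarith
      qed
    qed
  qed
qed

definition F0 :: "real \<Rightarrow> real \<Rightarrow> real \<Rightarrow> real \<Rightarrow> real" where
  "F0 M k1 gam kp = min (M * (kp / k1) powr gam) M + 1"

lemma P0_step:
  fixes q S Fv :: real
  assumes k: "2 \<le> k" and kp: "\<delta> + 1 \<le> kp" and d: "0 < \<delta>" and M: "0 < M"
    and gam: "0 \<le> gam" "gam \<le> (\<delta> / (\<delta> + 1)) ^ (k - 1)" and k1: "0 < k1"
    and qdef: "q = qsucc (Suc t) k (0, kp)"
    and S: "0 \<le> S" "S \<le> M" "kp \<le> k1 \<Longrightarrow> S \<le> 1"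
    and Fv: "Fv = F0 M k1 gam (kp + (if odd (Suc t) then 1 else 0))"
  shows "q * S + (1 - q) * Fv \<le> F0 M k1 gam kp"
proof -
  have kp1: "1 \<le> kp" using kp d by simp
  have q: "0 \<le> q" "q \<le> 1" using qsucc_bounds[of "(0, kp)"] qdef kp1 by auto
  show ?thesis
  proof (cases "odd (Suc t)")
    case False
    have "q = 0" unfolding qdef using q_BT0[of "Suc t" k kp] False k by simp
    then show ?thesis using False by (simp add: Fv)
  next
    case True
    show ?thesis
    proof (cases "kp \<le> k1")
      case False
      have "1 \<le> (kp / k1) powr gam" using False k1 gam by (intro ge_one_powr_ge_zero) auto
      then have "M \<le> M * (kp / k1) powr gam" using M by simp
      then have cur: "F0 M k1 gam kp = M + 1" by (simp add: F0_def)
      have "Fv \<le> M + 1" by (simp add: Fv F0_def)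
      then show ?thesis using q S cur by (intro conv_le) auto
    next
      case True2: True
      have qg: "gam / kp \<le> q"
      proof -
        have "q \<ge> (1 / kp) * (\<delta> / (\<delta> + 1)) ^ (k - 1)"
          unfolding qdef using q_AT0[OF True, of k \<delta> kp 0] kp d k by auto
        moreover have "gam / kp \<le> (1 / kp) * (\<delta> / (\<delta> + 1)) ^ (k - 1)"
          using gam kp1 by (simp add: divide_right_mono)
        ultimately show ?thesis by linarith
      qed
      have cur: "F0 M k1 gam kp = M * (kp / k1) powr gam + 1"
      proof -
        have "(kp / k1) powr gam \<le> 1" using True2 k1 kp1 gam by (intro powr_le1) auto
        then have "M * (kp / k1) powr gam \<le> M" using M by (simp add: mult_left_le)
        then show ?thesis by (simp add: F0_def)
      qed
      have fv: "Fv \<le> M * ((kp + 1) / k1) powr gam + 1" using True by (simp add: Fv F0_def)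
      have "q * S + (1 - q) * Fv \<le> q * 1 + (1 - q) * (M * ((kp + 1) / k1) powr gam + 1)"
        using S True2 fv q by (intro add_mono mult_left_mono) auto
      also have "\<dots> = 1 + M * ((1 - q) * ((kp + 1) / k1) powr gam)" by (simp add: algebra_simps)
      also have "\<dots> \<le> 1 + M * (kp / k1) powr gam"
        using powr_step[OF kp1 k1 gam(1) qg q(2)] M by (intro add_left_mono mult_left_mono) auto
      also have "\<dots> = F0 M k1 gam kp" using cur by simp
      finally show ?thesis .
    qed
  qed
qed

lemma prob_mono_step:
  assumes "\<delta> \<ge> 0"
  shows "measure_pmf.prob (red_run \<delta> k t) {x. fst x = 0} \<le> measure_pmf.prob (red_run \<delta> k (Suc t)) {x. fst x = 0}"
proof -
  let ?A = "{x::nat \<times> lstate. fst x = 0}"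
  have "emeasure (red_run \<delta> k t) ?A = (\<integral>\<^sup>+x. indicator ?A x \<partial>red_run \<delta> k t)" by simp
  also have "\<dots> \<le> (\<integral>\<^sup>+x. emeasure (redstep \<delta> (Suc t) x) ?A \<partial>red_run \<delta> k t)"
  proof (rule nn_integral_mono)
    fix x :: "nat \<times> lstate"
    show "indicator ?A x \<le> emeasure (redstep \<delta> (Suc t) x) ?A"
    proof (cases "fst x = 0")
      case True
      have "\<forall>y \<in> set_pmf (redstep \<delta> (Suc t) x). fst y = 0"
        using set_redstep[of _ \<delta> "Suc t" x] True by (auto simp: rfail_def)
      then have "emeasure (redstep \<delta> (Suc t) x) ?A = 1"
        by (subst measure_pmf.emeasure_eq_1_AE) (auto simp: AE_measure_pmf_iff)
      then show ?thesis by (simp add: True)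
    qed simp
  qed
  also have "\<dots> = emeasure (red_run \<delta> k (Suc t)) ?A" by simp
  finally show ?thesis by (simp add: measure_pmf.emeasure_eq_measure)
qed

lemma prob_mono:
  assumes "\<delta> \<ge> 0" "t \<le> t'"
  shows "measure_pmf.prob (red_run \<delta> k t) {x. fst x = 0} \<le> measure_pmf.prob (red_run \<delta> k t') {x. fst x = 0}"
  using assms(2)
proof (induction t' rule: dec_induct)
  case (step n)
  then show ?case using prob_mono_step[OF assms(1), of k n] by linarith
qed simp

lemma cross_bound:
  assumes "0 < lam2" "lam2 \<le> lam1" "M \<ge> 0"
  shows "F2 lam2 g ((2 + g) * real m) M t m kk \<le> min (exp (lam1 * (kk - real m))) M + 1"
proof -
  define z where "z = kk - real m"
  define pr :: real where "pr = (if odd t then 1 else 0)"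
  have pr: "0 \<le> pr" by (simp add: pr_def)
  have e: "kk + (1 + g) * real m - (2 + g) * real m - pr = z - pr" by (simp add: z_def algebra_simps)
  have F: "F2 lam2 g ((2 + g) * real m) M t m kk = min (exp (lam2 * (z - pr))) M"
    unfolding F2_def pr_def[symmetric] e by simp
  show ?thesis
  proof (cases "z \<le> 0")
    case True
    have "lam2 * (z - pr) \<le> 0" using True pr assms by (simp add: mult_nonneg_nonpos)
    then have "exp (lam2 * (z - pr)) \<le> 1" by simp
    then have a: "min (exp (lam2 * (z - pr))) M \<le> 1" by (rule order_trans[OF min.cobounded1])
    have b: "0 \<le> min (exp (lam1 * z)) M" using assms by simp
    show ?thesis unfolding F z_def[symmetric] using a b by linarith
  next
    case False
    have "lam2 * (z - pr) \<le> lam1 * z"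
    proof -
      have "lam2 * (z - pr) \<le> lam2 * z" using pr assms by (simp add: mult_left_mono)
      also have "\<dots> \<le> lam1 * z" using False assms by (intro mult_right_mono) auto
      finally show ?thesis .
    qed
    then have "exp (lam2 * (z - pr)) \<le> exp (lam1 * z)" by simp
    then have "min (exp (lam2 * (z - pr))) M \<le> min (exp (lam1 * z)) M" by (rule min.mono) simp
    then show ?thesis unfolding F z_def[symmetric] by simp
  qed
qed

lemma half_T: "real T / 2 \<le> real ((T + 1) div 2)"
proof -
  have "T \<le> 2 * ((T + 1) div 2)" by linarith
  then have "real T \<le> 2 * real ((T + 1) div 2)" by linarith
  then show ?thesis by simp
qed

lemma large_bound:
  fixes \<delta> :: real and k m T :: nat
  assumes d: "1 \<le> \<delta>" and m: "2 * \<delta> + 2 \<le> real m" "m < k" and M: "1 \<le> M"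
    and lam1: "0 < lam1" and W: "W = ln M / lam1"
    and r0: "0 \<le> r0" "r0 \<le> 1" "r0 * exp (- (lam1 * (\<delta> - 1))) + (1 - r0) * exp lam1 \<le> 1"
    and rho: "r0 * exp 1 \<le> real m / (real m + W)"
    and qm: "0 < qm" "qm \<le> (1 / (1 + log 2 (real k))) * (1 - 1 / (1 + log 2 (real (k - m + 1)))) ^ m"
    and g: "g = 4 / qm" and lam2: "0 < lam2" "lam2 \<le> qm / 4" "lam2 \<le> lam1"
    and Dl: "Dl = (2 + g) * real m"
    and T: "(\<delta> + 1) * (real k - 1) + Dl + 1 + ln M / lam2 \<le> real T / 2"
  shows "measure_pmf.prob (red_run \<delta> k T) {x. fst x = 0} \<ge> 1 - (2 + real T * exp lam1) / M"
proof -
  define F where "F = (\<lambda>t (x :: nat \<times> lstate). if fst x = 0 then 0 else if m < fst x then F1 lam1 M (fst x) (snd (snd x))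
      else F2 lam2 g Dl M t (fst x) (snd (snd x)))"
  have d0: "0 \<le> \<delta>" using d by simp
  have qm1: "qm \<le> 1"
  proof -
    have "0 \<le> log 2 (real k)" using m by simp
    then have A1: "1 / (1 + log 2 (real k)) \<le> 1" by (simp add: divide_le_eq)
    have A2: "(1 - 1 / (1 + log 2 (real (k - m + 1)))) ^ m \<le> 1"
     and A3: "0 \<le> (1 - 1 / (1 + log 2 (real (k - m + 1)))) ^ m"
    proof -
      have l: "0 \<le> log 2 (real (k - m + 1))" using m by simp
      have aux: "\<And>x::real. 0 \<le> x \<Longrightarrow> 0 \<le> 1 - 1 / (1 + x) \<and> 1 - 1 / (1 + x) \<le> 1"
        by (auto simp: divide_le_eq)
      from aux[OF l] have "0 \<le> 1 - 1 / (1 + log 2 (real (k - m + 1)))" "1 - 1 / (1 + log 2 (real (k - m + 1))) \<le> 1"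
        by auto
      then show "(1 - 1 / (1 + log 2 (real (k - m + 1)))) ^ m \<le> 1" "0 \<le> (1 - 1 / (1 + log 2 (real (k - m + 1)))) ^ m"
        by (auto intro: power_le_one)
    qed
    have "(1 / (1 + log 2 (real k))) * (1 - 1 / (1 + log 2 (real (k - m + 1)))) ^ m \<le> 1"
      by (rule mult_le_one[OF A1 A3 A2])
    then show ?thesis using qm by linarith
  qed
  have g0: "0 \<le> g" using g qm by simp
  have Mp: "0 < M" using M by simp
  have nonneg: "\<And>t x. 0 \<le> F t x"
    by (auto simp: F_def F1_def F2_def Mp less_imp_le)
  have step: "qsucc (Suc t) (fst x) (snd x) * F (Suc t) (rsucc \<delta> (Suc t) x) +
        (1 - qsucc (Suc t) (fst x) (snd x)) * F (Suc t) (rfail (Suc t) x) \<le> F t x + exp lam1"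
    if r: "rinv \<delta> k t x" for t x
  proof -
    obtain n sg kp where x: "x = (n, sg, kp)" by (cases x) auto
    have rn: "n \<le> k" "sg = k - n" "\<delta> + 1 \<le> kp" using r by (auto simp: rinv_def x)
    define q where "q = qsucc (Suc t) n (sg, kp)"
    have q: "0 \<le> q" "q \<le> 1" using qsucc_bounds[of "(sg, kp)"] rn d by (auto simp: q_def)
    have ex: "0 < exp lam1" by simp
    show ?thesis
    proof (cases "n = 0")
      case True
      then show ?thesis using ex by (simp add: x F_def q_def rfail_eq)
    next
      case n0: False
      show ?thesis
      proof (cases "m < n")
        case True
        let ?S = "F (Suc t) (rsucc \<delta> (Suc t) x)"
        have Sb: "0 \<le> ?S" "?S \<le> min (exp (lam1 * (max (kp - \<delta>) (\<delta> + 1) - real (n - 1)))) M + 1"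
        proof -
          show "0 \<le> ?S" by (rule nonneg)
          show "?S \<le> min (exp (lam1 * (max (kp - \<delta>) (\<delta> + 1) - real (n - 1)))) M + 1"
          proof (cases "m < n - 1")
            case True
            then show ?thesis by (simp add: F_def x rsucc_eq F1_def)
          next
            case False
            then have nm: "n - 1 = m" using \<open>m < n\<close> by simp
            have m0: "m \<noteq> 0" using m d by auto
            have "?S = F2 lam2 g ((2 + g) * real m) M (Suc t) m (max (kp - \<delta>) (\<delta> + 1))"
              using nm m0 by (simp add: F_def x rsucc_eq Dl)
            also have "\<dots> \<le> min (exp (lam1 * (max (kp - \<delta>) (\<delta> + 1) - real m))) M + 1"
              using lam2 Mp by (intro cross_bound) auto
            finally show ?thesis using nm by simp
          qed
        qed
        have Fv: "F (Suc t) (rfail (Suc t) x) = F1 lam1 M n (kp + (if odd (Suc t) then 1 else 0))"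
          using True n0 by (simp add: F_def x rfail_eq)
        have "q * F (Suc t) (rsucc \<delta> (Suc t) x) + (1 - q) * F (Suc t) (rfail (Suc t) x) \<le> F1 lam1 M n kp + exp lam1"
          by (rule P1_step[OF True m(1) rn(3) d M lam1 W r0 rho q_def Sb Fv])
        moreover have "F t x = F1 lam1 M n kp" using True n0 by (simp add: F_def x)
        ultimately show ?thesis unfolding q_def x by simp
      next
        case False
        then have nm: "n \<le> m" by simp
        have Fv: "F (Suc t) (rfail (Suc t) x) = F2 lam2 g Dl M (Suc t) n (kp + (if odd (Suc t) then 1 else 0))"
          using nm n0 by (simp add: F_def x rfail_eq)
        have Sb: "0 \<le> F (Suc t) (rsucc \<delta> (Suc t) x)"
          "F (Suc t) (rsucc \<delta> (Suc t) x) \<le> F2 lam2 g Dl M (Suc t) (n - 1) (max (kp - \<delta>) (\<delta> + 1))"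
          using nm n0 Mp by (auto simp: F_def x rsucc_eq nonneg F2_nonneg)
        have qbt: "qm \<le> q" if "even (Suc t)"
        proof -
          have "q \<ge> (1 / (1 + log 2 (real k))) * (1 - 1 / (1 + log 2 (real (k - m + 1)))) ^ m"
            unfolding q_def using q_BT[OF that _ nm m(2) rn(2)] n0 by simp
          then show ?thesis using qm by linarith
        qed
        have "q * F (Suc t) (rsucc \<delta> (Suc t) x) + (1 - q) * F (Suc t) (rfail (Suc t) x) \<le> F2 lam2 g Dl M t n kp"
          using n0 by (intro P2_step[OF _ rn(3) d0 Mp qm(1) qm1 g lam2(1,2) q qbt Sb Fv]) auto
        moreover have "F t x = F2 lam2 g Dl M t n kp" using nm n0 by (simp add: F_def x)
        ultimately show ?thesis unfolding q_def x fst_conv snd_conv by (smt (verit) exp_gt_zero)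
      qed
    qed
  qed
  have big: "F T x \<ge> M" if r: "rinv \<delta> k T x" and n0: "fst x \<noteq> 0" for x
  proof -
    obtain n sg kp where x: "x = (n, sg, kp)" by (cases x) auto
    have rn: "n \<le> k" "\<delta> + 1 \<le> kp" "kp \<ge> (\<delta> + 1) * (real n + 1 - real k) + real ((T + 1) div 2)"
      using r by (auto simp: rinv_def x)
    have n1: "1 \<le> n" using n0 x by simp
    have kpT: "kp \<ge> (\<delta> + 1) * (1 - real k) + real T / 2"
    proof -
      have "(\<delta> + 1) * (real n + 1 - real k) \<ge> (\<delta> + 1) * (1 - real k)" using d by (intro mult_left_mono) auto
      then show ?thesis using rn(3) half_T[of T] by linarith
    qed
    have lnM: "0 \<le> ln M" using M by simp
    have LW: "ln M / lam1 \<le> ln M / lam2" using lam2 lnM by (intro divide_left_mono) auto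
    have gDl: "0 \<le> Dl" using g0 by (simp add: Dl)
    show ?thesis
    proof (cases "m < n")
      case True
      have "kp - real n \<ge> ln M / lam1"
      proof -
        have e1: "(\<delta> + 1) * (real n + 1 - real k) = \<delta> * real n + real n + (\<delta> + 1) * (1 - real k)"
          by (simp add: algebra_simps)
        have e2: "(\<delta> + 1) * (real k - 1) = - ((\<delta> + 1) * (1 - real k))" by (simp add: algebra_simps)
        have "\<delta> * real n \<ge> 0" using d by simp
        then show ?thesis using rn(3) half_T[of T] T LW gDl e1 e2 by linarith
      qed
      then have "lam1 * (kp - real n) \<ge> ln M" using lam1 by (simp add: pos_divide_le_eq mult.commute)
      then have "exp (lam1 * (kp - real n)) \<ge> M" using Mp by (metis exp_ln exp_le_cancel_iff)
      then show ?thesis using True n0 by (simp add: x F_def F1_def)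
    next
      case False
      define pr :: real where "pr = (if odd T then 1 else 0)"
      have pr: "pr \<le> 1" by (simp add: pr_def)
      have "kp + (1 + g) * real n - Dl - pr \<ge> ln M / lam2"
      proof -
        have "(1 + g) * real n \<ge> 0" using g0 by simp
        moreover have e2: "(\<delta> + 1) * (real k - 1) = - ((\<delta> + 1) * (1 - real k))" by (simp add: algebra_simps)
        ultimately show ?thesis using kpT T pr by linarith
      qed
      then have "lam2 * (kp + (1 + g) * real n - Dl - pr) \<ge> ln M" using lam2 by (simp add: pos_divide_le_eq mult.commute)
      then have "exp (lam2 * (kp + (1 + g) * real n - Dl - pr)) \<ge> M" using Mp by (metis exp_ln exp_le_cancel_iff)
      then show ?thesis using False n0 by (simp add: x F_def F2_def pr_def)
    qed
  qed
  have init: "F 0 (k, 0, \<delta> + 1) \<le> 2"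
  proof -
    have "lam1 * (\<delta> + 1 - real k) \<le> 0" using m lam1 by (intro mult_nonneg_nonpos) auto
    then have "exp (lam1 * (\<delta> + 1 - real k)) \<le> 1" by simp
    then have mm: "min (exp (lam1 * (\<delta> + 1 - real k))) M \<le> 1" by (rule order_trans[OF min.cobounded1])
    have "F 0 (k, 0, \<delta> + 1) = min (exp (lam1 * (\<delta> + 1 - real k))) M + 1" using m by (simp add: F_def F1_def)
    then show ?thesis using mm by linarith
  qed
  have "measure_pmf.prob (red_run \<delta> k T) {x. fst x = 0} \<ge> 1 - (F 0 (k, 0, \<delta> + 1) + real T * exp lam1) / M"
    by (rule markov_fail[OF nonneg _ step d0 Mp big]) auto
  moreover have "(F 0 (k, 0, \<delta> + 1) + real T * exp lam1) / M \<le> (2 + real T * exp lam1) / M"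
    using init Mp by (intro divide_right_mono) auto
  ultimately show ?thesis by linarith
qed

lemma small_bound:
  fixes \<delta> :: real and k T :: nat
  assumes d: "1 \<le> \<delta>" and k: "2 \<le> k" and M: "1 \<le> M"
    and qm: "0 < qm" "qm \<le> (1 / (1 + log 2 (real k))) * (1 - 1 / (1 + log 2 (real (k - (k - 1) + 1)))) ^ (k - 1)"
    and g: "g = 4 / qm" and lam2: "0 < lam2" "lam2 \<le> qm / 4"
    and gam: "0 \<le> gam" "gam \<le> (\<delta> / (\<delta> + 1)) ^ (k - 1)"
    and k1: "\<delta> + 1 \<le> k1" and Dl: "k1 + (1 + g) * real k \<le> Dl"
    and T1: "k1 \<le> real T / 2"
    and T2: "(\<delta> + 1) * (real k - 1) + Dl + 1 + ln M / lam2 \<le> real T / 2"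
  shows "measure_pmf.prob (red_run \<delta> k T) {x. fst x = 0} \<ge> 1 - (M * ((\<delta> + 1) / k1) powr gam + 1) / M"
proof -
  define F where "F = (\<lambda>t (x :: nat \<times> lstate). if fst x = 0 then 0 else if fst x = k then F0 M k1 gam (snd (snd x))
      else F2 lam2 g Dl M t (fst x) (snd (snd x)))"
  have d0: "0 \<le> \<delta>" using d by simp
  have Mp: "0 < M" using M by simp
  have k1p: "0 < k1" using k1 d by simp
  have qm1: "qm \<le> 1"
  proof -
    have "0 \<le> log 2 (real k)" using k by simp
    then have A1: "1 / (1 + log 2 (real k)) \<le> 1" by (simp add: divide_le_eq)
    have e: "real (k - (k - 1) + 1) = 2" using k by simp
    have A2: "(1 - 1 / (1 + log 2 (real (k - (k - 1) + 1)))) ^ (k - 1) \<le> 1"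
     and A3: "0 \<le> (1 - 1 / (1 + log 2 (real (k - (k - 1) + 1)))) ^ (k - 1)"
      unfolding e by (auto intro: power_le_one)
    have "(1 / (1 + log 2 (real k))) * (1 - 1 / (1 + log 2 (real (k - (k - 1) + 1)))) ^ (k - 1) \<le> 1"
      by (rule mult_le_one[OF A1 A3 A2])
    then show ?thesis using qm by linarith
  qed
  have g0: "0 \<le> g" using g qm by simp
  have nonneg: "\<And>t x. 0 \<le> F t x"
    by (auto simp: F_def F0_def F2_def Mp less_imp_le)
  have step: "qsucc (Suc t) (fst x) (snd x) * F (Suc t) (rsucc \<delta> (Suc t) x) +
        (1 - qsucc (Suc t) (fst x) (snd x)) * F (Suc t) (rfail (Suc t) x) \<le> F t x + 0"
    if r: "rinv \<delta> k t x" for t x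
  proof -
    obtain n sg kp where x: "x = (n, sg, kp)" by (cases x) auto
    have rn: "n \<le> k" "sg = k - n" "\<delta> + 1 \<le> kp" using r by (auto simp: rinv_def x)
    define q where "q = qsucc (Suc t) n (sg, kp)"
    have q: "0 \<le> q" "q \<le> 1" using qsucc_bounds[of "(sg, kp)"] rn d by (auto simp: q_def)
    show ?thesis
    proof (cases "n = 0")
      case True
      then show ?thesis by (simp add: x F_def q_def rfail_eq)
    next
      case n0: False
      show ?thesis
      proof (cases "n = k")
        case True
        have sg0: "sg = 0" using rn True by simp
        let ?S = "F (Suc t) (rsucc \<delta> (Suc t) x)"
        have Seq: "?S = F2 lam2 g Dl M (Suc t) (k - 1) (max (kp - \<delta>) (\<delta> + 1))"
        proof -
          have "k - 1 \<noteq> k" "k - 1 \<noteq> 0" using k by auto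
          then show ?thesis using True by (simp add: F_def x rsucc_eq)
        qed
        have S1: "0 \<le> ?S" by (rule nonneg)
        have S2: "?S \<le> M" unfolding Seq F2_def by simp
        have S3: "?S \<le> 1" if "kp \<le> k1"
        proof -
          have "lam2 * (max (kp - \<delta>) (\<delta> + 1) + (1 + g) * real (k - 1) - Dl - (if odd (Suc t) then 1 else 0)) \<le> lam2 * 0"
          proof (intro mult_left_mono)
            have mx: "max (kp - \<delta>) (\<delta> + 1) \<le> kp" using rn d by simp
            have kk: "(1 + g) * real (k - 1) \<le> (1 + g) * real k" using g0 by (intro mult_left_mono) auto
            have pr: "0 \<le> (if odd (Suc t) then 1 else 0::real)" by simp
            show "max (kp - \<delta>) (\<delta> + 1) + (1 + g) * real (k - 1) - Dl - (if odd (Suc t) then 1 else 0) \<le> 0"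
              using mx kk pr that Dl by linarith
          qed (use lam2 in auto)
          then have "exp (lam2 * (max (kp - \<delta>) (\<delta> + 1) + (1 + g) * real (k - 1) - Dl - (if odd (Suc t) then 1 else 0))) \<le> 1"
            by simp
          then show ?thesis unfolding Seq F2_def by (rule order_trans[OF min.cobounded1])
        qed
        have Fv: "F (Suc t) (rfail (Suc t) x) = F0 M k1 gam (kp + (if odd (Suc t) then 1 else 0))"
          using True n0 by (simp add: F_def x rfail_eq)
        have qd: "q = qsucc (Suc t) k (0, kp)" using q_def sg0 True by simp
        have "q * F (Suc t) (rsucc \<delta> (Suc t) x) + (1 - q) * F (Suc t) (rfail (Suc t) x) \<le> F0 M k1 gam kp"
          using d by (intro P0_step[OF k rn(3) _ Mp gam k1p qd S1 S2 S3 Fv]) auto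
        moreover have "F t x = F0 M k1 gam kp" using True n0 by (simp add: F_def x)
        ultimately show ?thesis unfolding q_def x fst_conv snd_conv by simp
      next
        case False
        then have nk: "n < k" using rn by simp
        have nm: "n \<le> k - 1" using nk by simp
        have Fv: "F (Suc t) (rfail (Suc t) x) = F2 lam2 g Dl M (Suc t) n (kp + (if odd (Suc t) then 1 else 0))"
          using False n0 by (simp add: F_def x rfail_eq)
        have Sb: "0 \<le> F (Suc t) (rsucc \<delta> (Suc t) x)"
          "F (Suc t) (rsucc \<delta> (Suc t) x) \<le> F2 lam2 g Dl M (Suc t) (n - 1) (max (kp - \<delta>) (\<delta> + 1))"
          using nk n0 Mp by (auto simp: F_def x rsucc_eq nonneg F2_nonneg)
        have qbt: "qm \<le> q" if "even (Suc t)"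
        proof -
          have "q \<ge> (1 / (1 + log 2 (real k))) * (1 - 1 / (1 + log 2 (real (k - (k - 1) + 1)))) ^ (k - 1)"
            unfolding q_def using q_BT[OF that _ nm _ rn(2)] n0 k by simp
          then show ?thesis using qm by linarith
        qed
        have "q * F (Suc t) (rsucc \<delta> (Suc t) x) + (1 - q) * F (Suc t) (rfail (Suc t) x) \<le> F2 lam2 g Dl M t n kp"
          using n0 by (intro P2_step[OF _ rn(3) d0 Mp qm(1) qm1 g lam2(1,2) q qbt Sb Fv]) auto
        moreover have "F t x = F2 lam2 g Dl M t n kp" using False n0 by (simp add: F_def x)
        ultimately show ?thesis unfolding q_def x fst_conv snd_conv by simp
      qed
    qed
  qed
  have big: "F T x \<ge> M" if r: "rinv \<delta> k T x" and n0: "fst x \<noteq> 0" for x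
  proof -
    obtain n sg kp where x: "x = (n, sg, kp)" by (cases x) auto
    have rn: "n \<le> k" "\<delta> + 1 \<le> kp" "kp \<ge> (\<delta> + 1) * (real n + 1 - real k) + real ((T + 1) div 2)"
      using r by (auto simp: rinv_def x)
    have n1: "1 \<le> n" using n0 x by simp
    have kpT: "kp \<ge> (\<delta> + 1) * (1 - real k) + real T / 2"
    proof -
      have "(\<delta> + 1) * (real n + 1 - real k) \<ge> (\<delta> + 1) * (1 - real k)" using d by (intro mult_left_mono) auto
      then show ?thesis using rn(3) half_T[of T] by linarith
    qed
    show ?thesis
    proof (cases "n = k")
      case True
      have "kp \<ge> (\<delta> + 1) + real T / 2" using rn(3) half_T[of T] True by simp
      then have "k1 \<le> kp" using T1 d by linarith
      then have "1 \<le> (kp / k1) powr gam" using k1p gam by (intro ge_one_powr_ge_zero) auto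
      then have "M \<le> M * (kp / k1) powr gam" using Mp by simp
      then show ?thesis using True n0 by (simp add: x F_def F0_def)
    next
      case False
      define pr :: real where "pr = (if odd T then 1 else 0)"
      have pr: "pr \<le> 1" by (simp add: pr_def)
      have "kp + (1 + g) * real n - Dl - pr \<ge> ln M / lam2"
      proof -
        have "(1 + g) * real n \<ge> 0" using g0 by simp
        moreover have e2: "(\<delta> + 1) * (real k - 1) = - ((\<delta> + 1) * (1 - real k))" by (simp add: algebra_simps)
        ultimately show ?thesis using kpT T2 pr by linarith
      qed
      then have "lam2 * (kp + (1 + g) * real n - Dl - pr) \<ge> ln M" using lam2 by (simp add: pos_divide_le_eq mult.commute)
      then have "exp (lam2 * (kp + (1 + g) * real n - Dl - pr)) \<ge> M" using Mp by (metis exp_ln exp_le_cancel_iff)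
      then show ?thesis using False n0 by (simp add: x F_def F2_def pr_def)
    qed
  qed
  have init: "F 0 (k, 0, \<delta> + 1) \<le> M * ((\<delta> + 1) / k1) powr gam + 1"
    using k by (simp add: F_def F0_def)
  have "measure_pmf.prob (red_run \<delta> k T) {x. fst x = 0} \<ge> 1 - (F 0 (k, 0, \<delta> + 1) + real T * 0) / M"
    by (rule markov_fail[OF nonneg _ step d0 Mp big]) auto
  moreover have "(F 0 (k, 0, \<delta> + 1) + real T * 0) / M \<le> (M * ((\<delta> + 1) / k1) powr gam + 1) / M"
    using init Mp by (intro divide_right_mono) auto
  ultimately show ?thesis by linarith
qed

lemma ln_le_2sqrt: "0 < x \<Longrightarrow> ln x \<le> 2 * sqrt x"
proof -
  assume x: "0 < x"
  have "ln x = 2 * ln (sqrt x)" using x by (simp add: ln_sqrt)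
  also have "ln (sqrt x) \<le> sqrt x - 1" using x by (intro ln_le_minus_one) auto
  then have "2 * ln (sqrt x) \<le> 2 * sqrt x" by simp
  finally show ?thesis .
qed

lemma ln_Suc_le: "2 \<le> k \<Longrightarrow> ln (real k + 1) \<le> 2 * ln 2 * log 2 (real k)"
proof -
  assume k: "2 \<le> k"
  have "ln (real k + 1) \<le> ln (2 * real k)" using k by (subst ln_le_cancel_iff) auto
  also have "\<dots> = ln 2 + ln (real k)" using k by (simp add: ln_mult)
  also have "ln 2 \<le> ln (real k)" using k by (subst ln_le_cancel_iff) auto
  then have "ln 2 + ln (real k) \<le> 2 * ln (real k)" by simp
  also have "ln (real k) = ln 2 * log 2 (real k)" by (simp add: log_def)
  finally show ?thesis by simp
qed

lemma pow_lower_exp: fixes x :: real shows "0 \<le> x \<Longrightarrow> x \<le> 1/2 \<Longrightarrow> (1 - x) ^ m \<ge> exp (- 2 * x * real m)"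
proof -
  assume x: "0 \<le> x" "x \<le> 1/2"
  have "- x - 2 * x\<^sup>2 \<le> ln (1 - x)" by (rule ln_one_minus_pos_lower_bound[OF x])
  moreover have "- 2 * x \<le> - x - 2 * x\<^sup>2"
  proof -
    have "x * (2 * x) \<le> x * 1" using x by (intro mult_left_mono) auto
    then show ?thesis by (simp add: power2_eq_square algebra_simps)
  qed
  ultimately have l: "- 2 * x \<le> ln (1 - x)" by linarith
  have ee: "exp (ln (1 - x)) = 1 - x" using x by simp
  have "(1 - x) ^ m = exp (ln (1 - x)) ^ m" by (simp only: ee)
  also have "\<dots> = exp (real m * ln (1 - x))" by (rule exp_of_nat_mult[symmetric])
  finally have "(1 - x) ^ m = exp (real m * ln (1 - x))" .
  also have "real m * ln (1 - x) \<ge> real m * (- 2 * x)" using l by (intro mult_left_mono) auto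
  then have "exp (real m * ln (1 - x)) \<ge> exp (- 2 * x * real m)" by (simp add: algebra_simps)
  ultimately show ?thesis by simp
qed

lemma log2_le_self: "1 \<le> k \<Longrightarrow> log 2 (real k) \<le> real k"
proof -
  assume k: "1 \<le> k"
  have "real k < 2 ^ k" by (metis of_nat_less_iff of_nat_numeral of_nat_power less_exp)
  then have "log 2 (real k) < log 2 (2 ^ k)" using k by (subst log_less_cancel_iff) auto
  then show ?thesis by simp
qed

lemma exp1_le3: "exp (1::real) \<le> 3"
  using exp_bound[of 1] by simp

lemma exp1_ge2: "2 \<le> exp (1::real)"
  using exp_ge_add_one_self[of 1] by simp

lemma m_facts:
  fixes A \<delta> :: real and k :: nat
  assumes A: "0 < A" and d: "1 \<le> \<delta>" and k1: "128 * A\<^sup>2 + 2 \<le> real k" and k2: "4 * (2 * \<delta> + 3) \<le> real k"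
  defines "m \<equiv> nat \<lceil>A * ln (real k + 1) + 2 * \<delta> + 2\<rceil>"
  shows "A * ln (real k + 1) + 2 * \<delta> + 2 \<le> real m" "real m \<le> A * ln (real k + 1) + (2 * \<delta> + 3)"
    "2 * real m \<le> real k"
proof -
  have lnpos: "0 \<le> ln (real k + 1)" by simp
  have pos: "0 \<le> A * ln (real k + 1) + 2 * \<delta> + 2" using A d lnpos by simp
  show m1: "A * ln (real k + 1) + 2 * \<delta> + 2 \<le> real m"
    unfolding m_def using pos by linarith
  show m2: "real m \<le> A * ln (real k + 1) + (2 * \<delta> + 3)"
    unfolding m_def using pos by linarith
  have kpos: "0 < real k" using k2 d by simp
  have sq: "sqrt (real k + 1) \<le> real k / (8 * A)"
  proof -
    have "real k * (128 * A\<^sup>2 + 2) \<le> real k * real k" using k1 kpos by (intro mult_left_mono) auto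
    moreover have "64 * A\<^sup>2 * (real k + 1) \<le> real k * (128 * A\<^sup>2 + 2)"
    proof -
      have "1 \<le> real k" using k1 by (smt (verit) zero_le_power2)
      then have "64 * A\<^sup>2 * 1 \<le> 64 * A\<^sup>2 * real k" by (intro mult_left_mono) auto
      then show ?thesis using kpos by (simp add: algebra_simps)
    qed
    ultimately have "64 * A\<^sup>2 * (real k + 1) \<le> real k * real k" by linarith
    then have "real k + 1 \<le> (real k / (8 * A))\<^sup>2"
      using A by (simp add: power2_eq_square field_simps)
    then have "sqrt (real k + 1) \<le> sqrt ((real k / (8 * A))\<^sup>2)" by (subst real_sqrt_le_iff) auto
    also have "\<dots> = real k / (8 * A)" using A kpos by simp
    finally show ?thesis .
  qed
  have "A * ln (real k + 1) \<le> A * (2 * sqrt (real k + 1))"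
    using A ln_le_2sqrt[of "real k + 1"] by (intro mult_left_mono) auto
  also have "\<dots> \<le> A * (2 * (real k / (8 * A)))" using A sq by (intro mult_left_mono) auto
  also have "\<dots> = real k / 4" using A by simp
  finally have "A * ln (real k + 1) \<le> real k / 4" .
  then have h: "4 * (A * ln (real k + 1)) \<le> real k" by simp
  show "2 * real m \<le> real k" using m2 k2 h by (smt (verit))
qed

lemma qm_lower:
  fixes A c0 :: real and k m :: nat
  assumes A: "0 \<le> A" and c0: "0 \<le> c0" and k: "2 \<le> k" and km: "2 * real m \<le> real k"
    and mA: "real m \<le> A * ln (real k + 1) + c0"
  shows "(1 - 1 / (1 + log 2 (real (k - m + 1)))) ^ m \<ge> exp (- 2 * (2 * A * ln 2 + c0))"
proof -
  define L where "L = log 2 (real k)"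
  have L1: "1 \<le> L" using k by (simp add: L_def le_log_iff)
  have mk: "m \<le> k" using km by linarith
  have r: "real (k - m + 1) = real k - real m + 1" using mk by simp
  have kk: "real k / 2 \<le> real (k - m + 1)" using km r by simp
  have kk2: "2 \<le> real (k - m + 1)" using km r k by simp
  have lg: "L - 1 \<le> log 2 (real (k - m + 1))"
  proof -
    have "L - 1 = log 2 (real k / 2)" using k by (simp add: L_def log_divide)
    also have "\<dots> \<le> log 2 (real (k - m + 1))" using kk k by (subst log_le_cancel_iff) auto
    finally show ?thesis .
  qed
  have lg1: "1 \<le> log 2 (real (k - m + 1))" using kk2 by (simp add: le_log_iff)
  define ph where "ph = 1 / (1 + log 2 (real (k - m + 1)))"
  have ph0: "0 \<le> ph" using lg1 by (simp add: ph_def)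
  have aux: "\<And>x::real. 1 \<le> x \<Longrightarrow> 1 / (1 + x) \<le> 1 / 2" by (simp add: divide_le_eq)
  have ph2: "ph \<le> 1 / 2" unfolding ph_def using aux[OF lg1] .
  have phL: "ph \<le> 1 / L" unfolding ph_def using lg L1 by (intro divide_left_mono) auto
  have "ph * real m \<le> (1 / L) * (A * ln (real k + 1) + c0)"
    using phL mA ph0 L1 by (intro mult_mono) auto
  also have "\<dots> \<le> (1 / L) * (A * (2 * ln 2 * L) + c0 * L)"
  proof -
    have "A * ln (real k + 1) \<le> A * (2 * ln 2 * L)" using A ln_Suc_le[OF k] by (intro mult_left_mono) (auto simp: L_def)
    moreover have "c0 \<le> c0 * L" using c0 L1 by (simp add: mult_le_cancel_left1)
    ultimately show ?thesis using L1 by (intro mult_left_mono) auto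
  qed
  also have "\<dots> = 2 * A * ln 2 + c0" using L1 by (simp add: field_simps)
  finally have pm: "ph * real m \<le> 2 * A * ln 2 + c0" .
  have "(1 - ph) ^ m \<ge> exp (- 2 * ph * real m)" by (rule pow_lower_exp[OF ph0 ph2])
  moreover have "exp (- 2 * (2 * A * ln 2 + c0)) \<le> exp (- 2 * ph * real m)" using pm by simp
  ultimately show ?thesis unfolding ph_def by linarith
qed

lemma nat_ceil_bounds:
  fixes x :: real
  assumes "0 \<le> x"
  shows "real (nat \<lceil>x\<rceil>) \<le> x + 1" "x \<le> real (nat \<lceil>x\<rceil>)"
proof -
  have c: "0 \<le> \<lceil>x\<rceil>" using assms by simp
  have e: "real (nat \<lceil>x\<rceil>) = real_of_int \<lceil>x\<rceil>" using c by simp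
  show "real (nat \<lceil>x\<rceil>) \<le> x + 1" unfolding e by simp
  show "x \<le> real (nat \<lceil>x\<rceil>)" unfolding e by simp
qed

lemma large_k:
  fixes \<delta> :: real
  assumes de: "exp 1 < \<delta>"
  shows "\<exists>C1 K0. 0 < C1 \<and> (\<forall>k T. K0 \<le> k \<longrightarrow> 2 * (\<delta> + 1) * real k + C1 * (log 2 (real k))\<^sup>2 - 1 \<le> real T \<longrightarrow>
            measure_pmf.prob (red_run \<delta> k T) {x. fst x = 0} \<ge> 1 - 2 / (1 + real k))"
proof -
  have e2: "2 \<le> exp (1::real)" by (rule exp1_ge2)
  have d2: "2 < \<delta>" using de e2 by linarith
  have d1: "1 \<le> \<delta>" and d0: "0 \<le> \<delta>" using d2 by auto
  define rho where "rho = (1 + exp 1 / \<delta>) / 2"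
  define r0 where "r0 = rho / exp 1"
  define lam1 where "lam1 = min 1 ((r0 * \<delta> - 1) / \<delta>\<^sup>2)"
  define A where "A = 4 * rho / ((1 - rho) * lam1)"
  define c0 where "c0 = 2 * \<delta> + 3"
  define B where "B = 2 * A * ln 2 + c0"
  define th where "th = exp (- 2 * B)"
  define C2 where "C2 = 2 * (2 + 8 / th) * (2 * A + c0) + 16 * (1 / lam1 + 8 / th)"
  define C1 where "C1 = C2 + 2"
  define D where "D = 2 * \<delta> + 3 + C2"
  define K0 where "K0 = nat \<lceil>max (max (128 * A\<^sup>2 + 2) (4 * c0)) (2 * D + 4)\<rceil>"
  have ed: "exp 1 / \<delta> < 1" using de d2 by (simp add: divide_less_eq)
  have edp: "0 < exp 1 / \<delta>" using d2 by simp
  have rho: "1 / 2 < rho" "rho < 1" using ed edp by (auto simp: rho_def)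
  have r0: "0 \<le> r0" "r0 \<le> 1" using rho e2 by (auto simp: r0_def divide_le_eq)
  have r0d: "r0 * \<delta> = (\<delta> / exp 1 + 1) / 2" using e2 d2 by (simp add: r0_def rho_def field_simps)
  have r0d1: "1 < r0 * \<delta>"
  proof -
    have "1 < \<delta> / exp 1" using de by (simp add: less_divide_eq)
    moreover have "2 * (r0 * \<delta>) = \<delta> / exp 1 + 1" using r0d by simp
    ultimately show ?thesis by linarith
  qed
  have lam1: "0 < lam1" "lam1 \<le> 1" "lam1 \<le> (r0 * \<delta> - 1) / \<delta>\<^sup>2"
    using r0d1 d2 by (auto simp: lam1_def)
  have drift: "r0 * exp (- (lam1 * (\<delta> - 1))) + (1 - r0) * exp lam1 \<le> 1"
    by (rule drift1) (use r0 d1 r0d1 lam1 in auto)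
  have A: "0 < A" using rho lam1 by (simp add: A_def)
  have c0: "0 \<le> c0" using d0 by (simp add: c0_def)
  have B0: "0 \<le> B" using A c0 by (simp add: B_def)
  have th: "0 < th" "th \<le> 1" using B0 by (auto simp: th_def)
  have C2: "0 \<le> C2" using th lam1 A c0 by (simp add: C2_def)
  have C1: "0 < C1" using C2 by (simp add: C1_def)
  show ?thesis
  proof (intro exI conjI allI impI)
    show "0 < C1" by (rule C1)
    fix k T :: nat
    assume kK: "K0 \<le> k" and Tk: "2 * (\<delta> + 1) * real k + C1 * (log 2 (real k))\<^sup>2 - 1 \<le> real T"
    have kK': "max (max (128 * A\<^sup>2 + 2) (4 * c0)) (2 * D + 4) \<le> real k"
      using kK unfolding K0_def by linarith
    have k1: "128 * A\<^sup>2 + 2 \<le> real k" and k2: "4 * (2 * \<delta> + 3) \<le> real k" and k3: "2 * D + 4 \<le> real k"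
      using kK' by (auto simp: c0_def)
    have "0 \<le> 128 * A\<^sup>2" by simp
    then have "2 \<le> real k" using k1 by linarith
    then have k2': "2 \<le> k" by simp
    define m where "m = nat \<lceil>A * ln (real k + 1) + 2 * \<delta> + 2\<rceil>"
    note mf = m_facts[OF A d1 k1 k2, folded m_def]
    define L where "L = log 2 (real k)"
    have L1: "1 \<le> L" using k2' by (simp add: L_def le_log_iff)
    have Lk: "L \<le> real k" using log2_le_self[of k] k2' by (simp add: L_def)
    define M :: real where "M = (real k + 1) ^ 4"
    have M1: "1 \<le> M" by (simp add: M_def)
    have lnM: "ln M = 4 * ln (real k + 1)" by (simp add: M_def ln_realpow)
    define W where "W = ln M / lam1"
    define qm where "qm = (1 / (1 + log 2 (real k))) * (1 - 1 / (1 + log 2 (real (k - m + 1)))) ^ m"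
    have mc: "real m \<le> A * ln (real k + 1) + c0" using mf(2) by (simp add: c0_def)
    have pw: "(1 - 1 / (1 + log 2 (real (k - m + 1)))) ^ m \<ge> th"
      using qm_lower[OF less_imp_le[OF A] c0 k2' mf(3) mc] by (simp add: th_def B_def)
    have qmL: "qm \<ge> th / (2 * L)"
    proof -
      have "1 / (1 + L) \<ge> 1 / (2 * L)" using L1 by (intro divide_left_mono) auto
      then have "qm \<ge> (1 / (2 * L)) * th" unfolding qm_def L_def[symmetric]
        using pw th L1 by (intro mult_mono) auto
      then show ?thesis by simp
    qed
    have qm0: "0 < qm" using qmL th L1 by (smt (verit) divide_pos_pos)
    define g where "g = 4 / qm"
    define lam2 where "lam2 = min lam1 (qm / 4)"
    define Dl where "Dl = (2 + g) * real m"
    have lam2: "0 < lam2" "lam2 \<le> qm / 4" "lam2 \<le> lam1" using lam1 qm0 by (auto simp: lam2_def)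
    define R where "R = (\<delta> + 1) * (real k - 1) + Dl + 1 + ln M / lam2"
    define T0 where "T0 = nat \<lceil>2 * R\<rceil>"
    have gL: "g \<le> 8 * L / th"
    proof -
      have "g = 4 / qm" by (simp add: g_def)
      also have "\<dots> \<le> 4 / (th / (2 * L))" using qmL th L1 qm0 by (intro divide_left_mono) auto
      also have "\<dots> = 8 * L / th" using th L1 by (simp add: field_simps)
      finally show ?thesis .
    qed
    have ln2: "ln (2::real) \<le> 1" using ln_le_minus_one[of 2] by simp
    have lnk: "ln (real k + 1) \<le> 2 * L"
    proof -
      have "ln (real k + 1) \<le> 2 * ln 2 * L" using ln_Suc_le[OF k2'] by (simp add: L_def)
      also have "\<dots> \<le> 2 * 1 * L" using ln2 L1 by (intro mult_right_mono mult_left_mono) auto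
      finally show ?thesis by simp
    qed
    have mL: "real m \<le> (2 * A + c0) * L"
    proof -
      have "real m \<le> A * (2 * L) + c0" using mc lnk A by (smt (verit) mult_left_mono)
      also have "\<dots> \<le> A * (2 * L) + c0 * L" using c0 L1 by (simp add: mult_le_cancel_left1)
      finally show ?thesis by (simp add: algebra_simps)
    qed
    have DlL: "Dl \<le> (2 + 8 / th) * (2 * A + c0) * L\<^sup>2"
    proof -
      have "2 + g \<le> (2 + 8 / th) * L"
      proof -
        have "2 \<le> 2 * L" using L1 by simp
        then show ?thesis using gL by (simp add: algebra_simps)
      qed
      then have "Dl \<le> ((2 + 8 / th) * L) * ((2 * A + c0) * L)"
        unfolding Dl_def using mL g_def qm0 th L1 by (intro mult_mono) auto
      moreover have "((2 + 8 / th) * L) * ((2 * A + c0) * L) = (2 + 8 / th) * (2 * A + c0) * L\<^sup>2"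
        by (simp add: power2_eq_square)
      ultimately show ?thesis by simp
    qed
    have lnML: "ln M / lam2 \<le> 8 * (1 / lam1 + 8 / th) * L\<^sup>2"
    proof -
      have i: "1 / lam2 \<le> 1 / lam1 + 4 / qm"
      proof (cases "lam1 \<le> qm / 4")
        case True
        then have "lam2 = lam1" by (simp add: lam2_def)
        then show ?thesis using qm0 by simp
      next
        case False
        then have "lam2 = qm / 4" by (simp add: lam2_def)
        then have "1 / lam2 = 4 / qm" by (simp only:) simp
        moreover have "0 < 1 / lam1" using lam1 by simp
        ultimately show ?thesis by linarith
      qed
      have i2: "4 / qm \<le> 8 * L / th"
      proof -
        have "4 / qm \<le> 4 / (th / (2 * L))" using qmL th L1 qm0 by (intro divide_left_mono) auto
        also have "\<dots> = 8 * L / th" using th L1 by (simp add: field_simps)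
        finally show ?thesis .
      qed
      have lnM8: "ln M \<le> 8 * L" using lnM lnk by simp
      have lnM0: "0 \<le> ln M" using M1 by simp
      have "ln M / lam2 = ln M * (1 / lam2)" by simp
      also have "\<dots> \<le> (8 * L) * (1 / lam1 + 8 * L / th)"
        using i i2 lnM8 lnM0 lam2 by (intro mult_mono) auto
      also have "\<dots> \<le> (8 * L) * ((1 / lam1 + 8 / th) * L)"
      proof -
        have "1 / lam1 * 1 \<le> 1 / lam1 * L" using lam1 L1 by (intro mult_left_mono) auto
        moreover have "8 * L / th \<le> 8 / th * L" by simp
        ultimately show ?thesis using L1 by (intro mult_left_mono) (auto simp: algebra_simps)
      qed
      also have "\<dots> = 8 * (1 / lam1 + 8 / th) * L\<^sup>2" by (simp add: power2_eq_square algebra_simps)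
      finally show ?thesis .
    qed
    have RL: "2 * R \<le> 2 * (\<delta> + 1) * real k + C2 * L\<^sup>2"
    proof -
      define P where "P = (2 + 8 / th) * (2 * A + c0) * L\<^sup>2"
      define Q where "Q = 8 * (1 / lam1 + 8 / th) * L\<^sup>2"
      define Y where "Y = ln M / lam2"
      have hP: "Dl \<le> P" using DlL by (simp add: P_def)
      have hQ: "Y \<le> Q" using lnML by (simp add: Q_def Y_def)
      have e1: "2 * R = 2 * ((\<delta> + 1) * (real k - 1)) + 2 * Dl + 2 + 2 * Y"
        by (simp add: R_def Y_def algebra_simps)
      have e2: "(\<delta> + 1) * (real k - 1) = (\<delta> + 1) * real k - (\<delta> + 1)" by (simp add: algebra_simps)
      have e3: "C2 * L\<^sup>2 = 2 * P + 2 * Q" by (simp add: C2_def P_def Q_def algebra_simps)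
      have e4: "2 * (\<delta> + 1) * real k = 2 * ((\<delta> + 1) * real k)" by simp
      show ?thesis unfolding e1 e3 e4 using hP hQ e2 d0 by linarith
    qed
    have R0: "0 \<le> R"
    proof -
      have "0 \<le> (\<delta> + 1) * (real k - 1)" using d0 k2' by simp
      moreover have "0 \<le> Dl" using mf(1) qm0 d0 A by (simp add: Dl_def g_def)
      moreover have "0 \<le> ln M / lam2" using M1 lam2 by simp
      ultimately show ?thesis by (simp add: R_def)
    qed
    note T0b = nat_ceil_bounds[of "2 * R", folded T0_def]
    have T0T: "T0 \<le> T"
    proof -
      have "real T0 \<le> 2 * R + 1" using T0b R0 by simp
      also have "\<dots> \<le> 2 * (\<delta> + 1) * real k + C1 * L\<^sup>2 - 1"
      proof -
        have "1 \<le> L\<^sup>2" using L1 by (simp add: one_le_power)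
        then show ?thesis using RL by (simp add: C1_def algebra_simps)
      qed
      also have "\<dots> \<le> real T" using Tk by (simp add: L_def)
      finally show ?thesis by simp
    qed
    have rhoc: "r0 * exp 1 \<le> real m / (real m + W)"
    proof -
      have rr: "r0 * exp 1 = rho" by (simp add: r0_def)
      have W: "W = 4 * ln (real k + 1) / lam1" by (simp add: W_def lnM)
      have W0: "0 \<le> W" using lam1 by (simp add: W)
      have "rho * W = (1 - rho) * (A * ln (real k + 1))"
        using rho lam1 by (simp add: W A_def field_simps)
      also have "\<dots> \<le> (1 - rho) * real m" using mf(1) rho d0 by (intro mult_left_mono) auto
      finally have "rho * (real m + W) \<le> real m" by (simp add: algebra_simps)
      moreover have "0 < real m + W" using mf(1) d0 W0 A by (smt (verit) mult_nonneg_nonneg ln_ge_zero of_nat_0_le_iff)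
      ultimately show ?thesis unfolding rr by (simp add: le_divide_eq)
    qed
    have m22: "2 * \<delta> + 2 \<le> real m" using mf(1) A by (smt (verit) mult_nonneg_nonneg ln_ge_zero of_nat_0_le_iff)
    have mk: "m < k" using mf(3) m22 d0 by linarith
    have halfT0: "R \<le> real T0 / 2" using T0b R0 by simp
    have bound: "measure_pmf.prob (red_run \<delta> k T0) {x. fst x = 0} \<ge> 1 - (2 + real T0 * exp lam1) / M"
      by (rule large_bound[OF d1 m22 mk M1 lam1(1) W_def r0 drift rhoc qm0 _ g_def lam2 Dl_def])
         (use halfT0 in \<open>auto simp: qm_def R_def\<close>)
    have T0k: "2 + 3 * real T0 \<le> 2 * (real k + 1) ^ 3"
    proof -
      have "real T0 \<le> 2 * R + 1" using T0b R0 by simp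
      also have "\<dots> \<le> 2 * (\<delta> + 1) * real k + C2 * L\<^sup>2 + 1" using RL by simp
      also have "\<dots> \<le> D * (real k)\<^sup>2"
      proof -
        have kk: "1 \<le> real k" using k2' by simp
        have "real k \<le> (real k)\<^sup>2" using kk by (simp add: power2_eq_square)
        moreover have "L\<^sup>2 \<le> (real k)\<^sup>2" using Lk L1 by (intro power_mono) auto
        moreover have "1 \<le> (real k)\<^sup>2" using kk by (simp add: one_le_power)
        ultimately have "2 * (\<delta> + 1) * real k + C2 * L\<^sup>2 + 1 \<le> 2 * (\<delta> + 1) * (real k)\<^sup>2 + C2 * (real k)\<^sup>2 + (real k)\<^sup>2"
          using d0 C2 by (intro add_mono mult_left_mono) auto
        also have "\<dots> \<le> D * (real k)\<^sup>2" by (simp add: D_def algebra_simps)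
        finally show ?thesis .
      qed
      finally have "real T0 \<le> D * (real k)\<^sup>2" .
      then have "2 + 3 * real T0 \<le> 2 + 3 * D * (real k)\<^sup>2" by simp
      also have "3 * D * (real k)\<^sup>2 \<le> 2 * (real k) ^ 3"
      proof -
        have "3 * D \<le> 2 * real k" using k3 by simp
        then have "3 * D * (real k)\<^sup>2 \<le> 2 * real k * (real k)\<^sup>2" by (intro mult_right_mono) auto
        then show ?thesis by (simp add: power2_eq_square power3_eq_cube)
      qed
      then have "2 + 3 * D * (real k)\<^sup>2 \<le> 2 * (real k + 1) ^ 3"
      proof -
        have "(real k) ^ 3 + 1 \<le> (real k + 1) ^ 3" by (simp add: power3_eq_cube algebra_simps)
        then show ?thesis using \<open>3 * D * (real k)\<^sup>2 \<le> 2 * (real k) ^ 3\<close> by linarith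
      qed
      finally show ?thesis .
    qed
    have "(2 + real T0 * exp lam1) / M \<le> 2 / (1 + real k)"
    proof -
      have "exp lam1 \<le> 3" using lam1 exp1_le3 by (smt (verit) exp_le_cancel_iff)
      then have "2 + real T0 * exp lam1 \<le> 2 + 3 * real T0" by (intro add_left_mono) (simp add: mult_left_le mult.commute mult_left_mono)
      also have "\<dots> \<le> 2 * (real k + 1) ^ 3" by (rule T0k)
      finally have "(2 + real T0 * exp lam1) / M \<le> 2 * (real k + 1) ^ 3 / M" using M1 by (intro divide_right_mono) auto
      also have "\<dots> = 2 / (1 + real k)"
      proof -
        have "M = (real k + 1) ^ 3 * (real k + 1)" unfolding M_def by (rule power_Suc2[of _ 3, simplified])
        moreover have "(real k + 1) ^ 3 \<noteq> 0" by simp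
        ultimately show ?thesis by (simp add: add.commute)
      qed
      finally show ?thesis .
    qed
    moreover have "measure_pmf.prob (red_run \<delta> k T0) {x. fst x = 0} \<le> measure_pmf.prob (red_run \<delta> k T) {x. fst x = 0}"
      by (rule prob_mono[OF d0 T0T])
    ultimately show "measure_pmf.prob (red_run \<delta> k T) {x. fst x = 0} \<ge> 1 - 2 / (1 + real k)" using bound by linarith
  qed
qed

lemma small_k:
  fixes \<delta> :: real and k :: nat
  assumes d: "1 \<le> \<delta>" and k: "2 \<le> k"
  shows "\<exists>Tk. \<forall>T. Tk \<le> T \<longrightarrow> measure_pmf.prob (red_run \<delta> k T) {x. fst x = 0} \<ge> 1 - 2 / (1 + real k)"
proof -
  define M where "M = real k + 1"
  define qm where "qm = (1 / (1 + log 2 (real k))) * (1 - 1 / (1 + log 2 (real (k - (k - 1) + 1)))) ^ (k - 1)"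
  define g where "g = 4 / qm"
  define lam2 where "lam2 = qm / 4"
  define gam where "gam = (\<delta> / (\<delta> + 1)) ^ (k - 1)"
  define k1 where "k1 = (\<delta> + 1) * (real k + 1) powr (1 / gam)"
  define Dl where "Dl = k1 + (1 + g) * real k"
  define R where "R = max k1 ((\<delta> + 1) * (real k - 1) + Dl + 1 + ln M / lam2)"
  define Tk where "Tk = nat \<lceil>2 * R\<rceil>"
  have M1: "1 \<le> M" by (simp add: M_def)
  have e2: "real (k - (k - 1) + 1) = 2" using k by simp
  have qm0: "0 < qm"
  proof -
    have "0 < 1 / (1 + log 2 (real k))" using k by (simp add: add_pos_nonneg)
    moreover have "(1 - 1 / (1 + log 2 (real (k - (k - 1) + 1)))) ^ (k - 1) = (1 / 2) ^ (k - 1)"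
      unfolding e2 by simp
    ultimately show ?thesis by (simp add: qm_def)
  qed
  have gam0: "0 < gam" using d by (simp add: gam_def)
  have gam1: "gam \<le> 1" using d by (simp add: gam_def power_le_one)
  have pw1: "1 \<le> (real k + 1) powr (1 / gam)" using gam0 by (intro ge_one_powr_ge_zero) auto
  have k1: "\<delta> + 1 \<le> k1" using pw1 d by (simp add: k1_def mult_le_cancel_left1)
  show ?thesis
  proof (intro exI allI impI)
    fix T assume T: "Tk \<le> T"
    have R0: "0 \<le> R" using k1 d by (simp add: R_def)
    have "2 * R \<le> real Tk" unfolding Tk_def using R0 by linarith
    then have TR: "R \<le> real T / 2" using T by linarith
    have b: "measure_pmf.prob (red_run \<delta> k T) {x. fst x = 0} \<ge> 1 - (M * ((\<delta> + 1) / k1) powr gam + 1) / M"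
    proof (rule small_bound[OF d k M1 qm0 _ g_def _ _ _ _ k1])
      have "k1 \<le> R" "(\<delta> + 1) * (real k - 1) + Dl + 1 + ln M / lam2 \<le> R" by (simp_all add: R_def)
      then show "k1 \<le> real T / 2" "(\<delta> + 1) * (real k - 1) + Dl + 1 + ln M / lam2 \<le> real T / 2"
        using TR by linarith+
    next
      show "qm \<le> (1 / (1 + log 2 (real k))) * (1 - 1 / (1 + log 2 (real (k - (k - 1) + 1)))) ^ (k - 1)"
        by (simp add: qm_def)
      show "0 < lam2" using qm0 by (simp add: lam2_def)
      show "lam2 \<le> qm / 4" by (simp add: lam2_def)
      show "0 \<le> gam" using gam0 by simp
      show "gam \<le> (\<delta> / (\<delta> + 1)) ^ (k - 1)" by (simp add: gam_def)
      show "k1 + (1 + g) * real k \<le> Dl" by (simp add: Dl_def)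
    qed
    have "((\<delta> + 1) / k1) powr gam = 1 / (real k + 1)"
    proof -
      have "(\<delta> + 1) / k1 = 1 / (real k + 1) powr (1 / gam)" using d by (simp add: k1_def)
      then have "((\<delta> + 1) / k1) powr gam = 1 / ((real k + 1) powr (1 / gam)) powr gam"
        by (simp add: powr_divide)
      also have "((real k + 1) powr (1 / gam)) powr gam = real k + 1"
        using gam0 by (simp add: powr_powr)
      finally show ?thesis .
    qed
    then have "(M * ((\<delta> + 1) / k1) powr gam + 1) / M = 2 / (1 + real k)"
      by (simp add: M_def field_simps)
    then show "measure_pmf.prob (red_run \<delta> k T) {x. fst x = 0} \<ge> 1 - 2 / (1 + real k)" using b by simp
  qed
qed

theorem mainTheorem1:
  fixes \<delta> :: real
  assumes "exp 1 < \<delta>" and "\<delta> \<le> (\<Sum>j=1..5. (5/6::real) ^ j)"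
  shows "\<exists>C>0. \<forall>k::nat. k \<ge> 2 \<longrightarrow>
           measure_pmf.prob
             (ofa_run \<delta> k (nat \<lfloor>2 * (\<delta> + 1) * real k + C * (log 2 (real k))\<^sup>2\<rfloor>))
             {g. fst g = {}}
           \<ge> 1 - 2 / (1 + real k)"
proof -
  have e2: "2 \<le> exp (1::real)" by (rule exp1_ge2)
  have d1: "1 \<le> \<delta>" using assms(1) e2 by linarith
  have d0: "0 \<le> \<delta>" using d1 by simp
  obtain C1 K0 where C1: "0 < C1" and large: "\<And>k T. K0 \<le> k \<Longrightarrow> 2 * (\<delta> + 1) * real k + C1 * (log 2 (real k))\<^sup>2 - 1 \<le> real T \<Longrightarrow>
            measure_pmf.prob (red_run \<delta> k T) {x. fst x = 0} \<ge> 1 - 2 / (1 + real k)"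
    using large_k[OF assms(1)] by blast
  define Tf where "Tf = (\<lambda>k. SOME Tk. \<forall>T. Tk \<le> T \<longrightarrow> measure_pmf.prob (red_run \<delta> k T) {x. fst x = 0} \<ge> 1 - 2 / (1 + real k))"
  have Tf: "\<And>k T. 2 \<le> k \<Longrightarrow> Tf k \<le> T \<Longrightarrow> measure_pmf.prob (red_run \<delta> k T) {x. fst x = 0} \<ge> 1 - 2 / (1 + real k)"
  proof -
    fix k T :: nat assume k: "2 \<le> k" and T: "Tf k \<le> T"
    have "\<forall>T. Tf k \<le> T \<longrightarrow> measure_pmf.prob (red_run \<delta> k T) {x. fst x = 0} \<ge> 1 - 2 / (1 + real k)"
      unfolding Tf_def by (rule someI_ex[OF small_k[OF d1 k]])
    then show "measure_pmf.prob (red_run \<delta> k T) {x. fst x = 0} \<ge> 1 - 2 / (1 + real k)" using T by blast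
  qed
  define C where "C = C1 + (\<Sum>k\<in>{2..<K0}. real (Tf k) + 1)"
  have S0: "0 \<le> (\<Sum>k\<in>{2..<K0}. real (Tf k) + 1)" by (intro sum_nonneg) auto
  have C0: "0 < C" using C1 S0 by (simp add: C_def)
  show ?thesis
  proof (intro exI conjI allI impI)
    show "0 < C" by (rule C0)
    fix k :: nat assume k: "2 \<le> k"
    define L where "L = log 2 (real k)"
    have L1: "1 \<le> L" using k by (simp add: L_def le_log_iff)
    have L2: "1 \<le> L\<^sup>2" using L1 by (simp add: one_le_power)
    define x where "x = 2 * (\<delta> + 1) * real k + C * L\<^sup>2"
    have x0: "0 \<le> x" using d0 C0 by (simp add: x_def)
    define T where "T = nat \<lfloor>x\<rfloor>"
    have Tx: "x - 1 \<le> real T"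
    proof -
      have "0 \<le> \<lfloor>x\<rfloor>" using x0 by simp
      then have "real T = real_of_int \<lfloor>x\<rfloor>" by (simp add: T_def)
      then show ?thesis by linarith
    qed
    have "measure_pmf.prob (red_run \<delta> k T) {x. fst x = 0} \<ge> 1 - 2 / (1 + real k)"
    proof (cases "K0 \<le> k")
      case True
      show ?thesis
      proof (rule large[OF True])
        have "C1 * L\<^sup>2 \<le> C * L\<^sup>2" using S0 L2 by (intro mult_right_mono) (auto simp: C_def)
        then show "2 * (\<delta> + 1) * real k + C1 * (log 2 (real k))\<^sup>2 - 1 \<le> real T"
          using Tx unfolding x_def L_def by linarith
      qed
    next
      case False
      then have kin: "k \<in> {2..<K0}" using k by simp
      have "real (Tf k) + 1 \<le> (\<Sum>k\<in>{2..<K0}. real (Tf k) + 1)"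
        by (rule member_le_sum[OF kin]) auto
      then have "real (Tf k) + 1 \<le> C" using C1 by (simp add: C_def)
      also have "C \<le> C * L\<^sup>2" using C0 L2 by (simp add: mult_le_cancel_left1)
      finally have "real (Tf k) + 1 \<le> C * L\<^sup>2" .
      moreover have "0 \<le> 2 * (\<delta> + 1) * real k" using d0 by simp
      ultimately have "real (Tf k) \<le> real T" using Tx unfolding x_def by linarith
      then show ?thesis by (intro Tf k) simp
    qed
    then show "measure_pmf.prob (ofa_run \<delta> k (nat \<lfloor>2 * (\<delta> + 1) * real k + C * (log 2 (real k))\<^sup>2\<rfloor>)) {g. fst g = {}}
           \<ge> 1 - 2 / (1 + real k)"
      using prob_reduce[OF d0] by (simp add: T_def x_def L_def)
  qed
qed

end
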